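(* The map $\mathbb B_\infty\to\mathbb V_\infty(\overline K)$, $[\mathcal B]\mapsto\omega_{\mathcal B}$, is well defined and bijective.
   Context: $(K,v)$ is a valued field, $\overline K$ an algebraic closure, $\bar v$ a fixed extension of $v$ to $\overline K$ with value group $\Gamma$. Closed balls: $B(a,\gamma)=\{c\in\overline K\mid\bar v(c-a)\ge\gamma\}$ for $a\in\overline K,\gamma\in\Gamma$; $\omega_{B(a,\gamma)}(\sum a_n(x-a)^n)=\min_n\{\bar v(a_n)+n\gamma\}$. $\mathcal N_\infty$ is the set of nests $\mathcal B=(B_i)_{i\in I}$ of closed balls ($I$ totally ordered, $i<j\iff B_i\supsetneq B_j$) with $\bigcap_i B_i=\emptyset$; for such $\mathcal B$, $\omega_{\mathcal B}(f)=\max_i\omega_{B_i}(f)$ for $f\in\overline K[x]$ (the values stabilize). Two nests are equivalent, $\mathcal B\sim\mathcal C$, if they are mutually cofinal (each ball of one contains some ball of the other); $\mathbb B_\infty=\mathcal N_\infty/\sim$. $\mathbb V_\infty(\overline K)$ is the set of valuations $\omega$ on $\overline K(x)$ extending $\bar v$ that are valuation-algebraic: $\Gamma_\omega/\Gamma$ is torsion (so $\Gamma_\omega=\Gamma$ after the canonical identification) and the residue field extension of $\omega$ over that of $\bar v$ is algebraic. *)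

theory Defs
  imports "HOL-Computational_Algebra.Polynomial" "HOL-Computational_Algebra.Fraction_Field"
begin

text \<open>Convention: a valuation is a map into a linearly ordered abelian group 'g;
  its value at 0 (which should be infinity) is the junk value 0.\<close>

primrec nmult :: "nat \<Rightarrow> 'g::linordered_ab_group_add \<Rightarrow> 'g" where
  "nmult 0 g = 0"
| "nmult (Suc n) g = g + nmult n g"

definition is_valuation :: "('b::field \<Rightarrow> 'g::linordered_ab_group_add) \<Rightarrow> bool" where
  "is_valuation w \<longleftrightarrow> w 0 = 0
     \<and> (\<forall>a b. a \<noteq> 0 \<longrightarrow> b \<noteq> 0 \<longrightarrow> w (a * b) = w a + w b)
     \<and> (\<forall>a b. a \<noteq> 0 \<longrightarrow> b \<noteq> 0 \<longrightarrow> a + b \<noteq> 0 \<longrightarrow> min (w a) (w b) \<le> w (a + b))"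

definition value_group :: "('b::field \<Rightarrow> 'g::linordered_ab_group_add) \<Rightarrow> 'g set" where
  "value_group w = w ` (UNIV - {0})"

definition cball_v :: "('a::field \<Rightarrow> 'g::linordered_ab_group_add) \<Rightarrow> 'a \<Rightarrow> 'g \<Rightarrow> 'a set" where
  "cball_v v a \<gamma> = {c. c = a \<or> \<gamma> \<le> v (c - a)}"

definition is_closed_ball :: "('a::field \<Rightarrow> 'g::linordered_ab_group_add) \<Rightarrow> 'a set \<Rightarrow> bool" where
  "is_closed_ball v B \<longleftrightarrow> (\<exists>a \<gamma>. \<gamma> \<in> value_group v \<and> B = cball_v v a \<gamma>)"

definition omega_center :: "('a::field \<Rightarrow> 'g::linordered_ab_group_add) \<Rightarrow> 'a \<Rightarrow> 'g \<Rightarrow> 'a poly \<Rightarrow> 'g" where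
  "omega_center v a \<gamma> f = (if f = 0 then 0 else
     Min {v (coeff (pcompose f [:a, 1:]) n) + nmult n \<gamma> | n. coeff (pcompose f [:a, 1:]) n \<noteq> 0})"

definition omega_ball :: "('a::field \<Rightarrow> 'g::linordered_ab_group_add) \<Rightarrow> 'a set \<Rightarrow> 'a poly \<Rightarrow> 'g" where
  "omega_ball v B f = (SOME w. \<exists>a \<gamma>. \<gamma> \<in> value_group v \<and> B = cball_v v a \<gamma> \<and> w = omega_center v a \<gamma> f)"

text \<open>Nests of closed balls with empty intersection; the index set I is the nest itself,
  ordered by reverse inclusion.\<close>
definition nests_inf :: "('a::field \<Rightarrow> 'g::linordered_ab_group_add) \<Rightarrow> 'a set set set" where
  "nests_inf v = {N. N \<noteq> {} \<and> (\<forall>B\<in>N. is_closed_ball v B)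
     \<and> (\<forall>B\<in>N. \<forall>C\<in>N. B \<subseteq> C \<or> C \<subseteq> B) \<and> \<Inter> N = {}}"

definition nest_equiv :: "('a::field \<Rightarrow> 'g::linordered_ab_group_add) \<Rightarrow> ('a set set \<times> 'a set set) set" where
  "nest_equiv v = {(N, M). N \<in> nests_inf v \<and> M \<in> nests_inf v
     \<and> (\<forall>B\<in>N. \<exists>C\<in>M. C \<subseteq> B) \<and> (\<forall>C\<in>M. \<exists>B\<in>N. B \<subseteq> C)}"

definition omega_nest_poly :: "('a::field \<Rightarrow> 'g::linordered_ab_group_add) \<Rightarrow> 'a set set \<Rightarrow> 'a poly \<Rightarrow> 'g" where
  "omega_nest_poly v N f = (THE w. w \<in> {omega_ball v B f | B. B \<in> N}
      \<and> (\<forall>u\<in>{omega_ball v B f | B. B \<in> N}. u \<le> w))"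

definition omega_nest :: "('a::field \<Rightarrow> 'g::linordered_ab_group_add) \<Rightarrow> 'a set set \<Rightarrow> 'a poly fract \<Rightarrow> 'g" where
  "omega_nest v N q = (if q = 0 then 0 else
     (SOME w. \<exists>f g. g \<noteq> 0 \<and> q = Fract f g \<and> w = omega_nest_poly v N f - omega_nest_poly v N g))"

definition const_fract :: "'a::field \<Rightarrow> 'a poly fract" where
  "const_fract c = Fract [:c:] 1"

text \<open>V_infty: valuations on Kbar(x) extending v, valuation-algebraic.\<close>
definition V_inf :: "('a::field \<Rightarrow> 'g::linordered_ab_group_add) \<Rightarrow> ('a poly fract \<Rightarrow> 'g) set" where
  "V_inf v = {w. is_valuation w
     \<and> (\<forall>c. w (const_fract c) = v c)
     \<and> (\<forall>\<delta>\<in>value_group w. \<exists>n>0. nmult n \<delta> \<in> value_group v)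
     \<and> (\<forall>q. 0 \<le> w q \<longrightarrow>
          (\<exists>(c::nat \<Rightarrow> 'a) n. (\<forall>i\<le>n. c i = 0 \<or> 0 \<le> v (c i))
             \<and> (\<exists>i\<le>n. c i \<noteq> 0 \<and> v (c i) = 0)
             \<and> (let s = (\<Sum>i\<le>n. const_fract (c i) * q ^ i) in s = 0 \<or> 0 < w s)))}"

end

theory Submission
  imports Defs
begin

lemma nmult_add: "nmult n (a + b) = nmult n a + nmult n (b::'g::linordered_ab_group_add)"
  by (induction n) (simp_all add: algebra_simps)
lemma nmult_zero[simp]: "nmult n (0::'g::linordered_ab_group_add) = 0"
  by (induction n) simp_all
lemma nmult_mono: "a \<le> b \<Longrightarrow> nmult n a \<le> nmult n (b::'g::linordered_ab_group_add)"
  by (induction n) (simp_all add: add_mono)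
lemma nmult_strict_mono: "a < b \<Longrightarrow> n > 0 \<Longrightarrow> nmult n a < nmult n (b::'g::linordered_ab_group_add)"
proof (induction n)
  case 0 then show ?case by simp
next
  case (Suc n) show ?case
    using Suc nmult_mono[of a b n] by (cases n) (simp_all add: add_less_le_mono)
qed
lemma nmult_inj: "nmult n a = nmult n b \<Longrightarrow> n > 0 \<Longrightarrow> a = (b::'g::linordered_ab_group_add)"
  by (metis less_irrefl linorder_neqE nmult_strict_mono)
lemma nmult_one[simp]: "nmult 1 a = a" by simp
lemma nmult_sum: "nmult (m + n) a = nmult m a + nmult n (a::'g::linordered_ab_group_add)"
  by (induction m) (simp_all add: algebra_simps)

lemma double_eq_zero: "(x::'g::linordered_ab_group_add) + x = 0 \<Longrightarrow> x = 0"
  by (metis add_neg_neg add_pos_pos less_irrefl linorder_neqE)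

locale val =
  fixes v :: "'a::field \<Rightarrow> 'g::linordered_ab_group_add"
  assumes isv: "is_valuation v"
begin

lemma v0[simp]: "v 0 = 0" using isv by (simp add: is_valuation_def)
lemma vmult: "a \<noteq> 0 \<Longrightarrow> b \<noteq> 0 \<Longrightarrow> v (a * b) = v a + v b"
  using isv by (simp add: is_valuation_def)
lemma vadd: "a \<noteq> 0 \<Longrightarrow> b \<noteq> 0 \<Longrightarrow> a + b \<noteq> 0 \<Longrightarrow> min (v a) (v b) \<le> v (a + b)"
  using isv by (simp add: is_valuation_def)
lemma v1[simp]: "v 1 = 0"
  using vmult[of 1 1] by simp
lemma vm1[simp]: "v (-1) = 0"
  using vmult[of "-1" "-1"] double_eq_zero by simp
lemma vneg[simp]: "v (- a) = v a"
proof (cases "a = 0")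
  case False
  then show ?thesis using vmult[of "-1" a] by simp
qed simp
lemma vminus_comm: "v (a - b) = v (b - a)"
  by (metis minus_diff_eq vneg)
lemma vinv: "a \<noteq> 0 \<Longrightarrow> v (inverse a) = - v a"
proof -
  assume a: "a \<noteq> 0"
  have "v a + v (inverse a) = 0" using vmult[of a "inverse a"] a by simp
  then show ?thesis by (rule minus_unique[symmetric])
qed
lemma vdiv: "a \<noteq> 0 \<Longrightarrow> b \<noteq> 0 \<Longrightarrow> v (a / b) = v a - v b"
  by (simp add: divide_inverse vmult vinv)
lemma vpow: "a \<noteq> 0 \<Longrightarrow> v (a ^ n) = nmult n (v a)"
  by (induction n) (simp_all add: vmult)

definition vge :: "'a \<Rightarrow> 'g \<Rightarrow> bool" where "vge x m \<longleftrightarrow> (x \<noteq> 0 \<longrightarrow> m \<le> v x)"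
definition vgt :: "'a \<Rightarrow> 'g \<Rightarrow> bool" where "vgt x m \<longleftrightarrow> (x \<noteq> 0 \<longrightarrow> m < v x)"

lemma vge_add: "vge x m \<Longrightarrow> vge y m \<Longrightarrow> vge (x + y) m"
proof -
  assume a: "vge x m" "vge y m"
  show ?thesis
  proof (cases "x = 0 \<or> y = 0 \<or> x + y = 0")
    case True then show ?thesis using a by (auto simp: vge_def)
  next
    case False
    then have "min (v x) (v y) \<le> v (x + y)" using vadd by blast
    moreover have "m \<le> min (v x) (v y)" using a False by (simp add: vge_def)
    ultimately have "m \<le> v (x + y)" by (rule order.trans[rotated])
    then show ?thesis by (simp add: vge_def)
  qed
qed
lemma vgt_add: "vgt x m \<Longrightarrow> vgt y m \<Longrightarrow> vgt (x + y) m"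
proof -
  assume a: "vgt x m" "vgt y m"
  show ?thesis
  proof (cases "x = 0 \<or> y = 0 \<or> x + y = 0")
    case True then show ?thesis using a by (auto simp: vgt_def)
  next
    case False
    then have "min (v x) (v y) \<le> v (x + y)" using vadd by blast
    moreover have "m < min (v x) (v y)" using a False by (simp add: vgt_def)
    ultimately have "m < v (x + y)" by (rule order.strict_trans2[rotated])
    then show ?thesis by (simp add: vgt_def)
  qed
qed
lemma vge_neg: "vge (- x) m = vge x m" by (simp add: vge_def)
lemma vgt_neg: "vgt (- x) m = vgt x m" by (simp add: vgt_def)
lemma vge_diff: "vge x m \<Longrightarrow> vge y m \<Longrightarrow> vge (x - y) m"
  using vge_add[of x m "-y"] by (simp add: vge_neg)
lemma vgt_diff: "vgt x m \<Longrightarrow> vgt y m \<Longrightarrow> vgt (x - y) m"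
  using vgt_add[of x m "-y"] by (simp add: vgt_neg)
lemma vge_mono: "vge x m \<Longrightarrow> m' \<le> m \<Longrightarrow> vge x m'" by (auto simp: vge_def)
lemma vgt_mono: "vgt x m \<Longrightarrow> m' \<le> m \<Longrightarrow> vgt x m'" by (auto simp: vgt_def)
lemma vgt_vge: "vgt x m \<Longrightarrow> vge x m" by (auto simp: vgt_def vge_def)
lemma vge_0[simp]: "vge 0 m" by (simp add: vge_def)
lemma vgt_0[simp]: "vgt 0 m" by (simp add: vgt_def)
lemma vge_multI: "vge x m \<Longrightarrow> vge y n \<Longrightarrow> vge (x * y) (m + n)"
  by (auto simp: vge_def vmult add_mono)
lemma vgt_multI: "vgt x m \<Longrightarrow> vge y n \<Longrightarrow> vgt (x * y) (m + n)"
  by (auto simp: vge_def vgt_def vmult add_less_le_mono)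

lemma strict_ultra: assumes "x \<noteq> 0" "vgt y (v x)" shows "v (x + y) = v x"
proof (cases "y = 0")
  case False
  with assms have lt: "v x < v y" by (simp add: vgt_def)
  have ne: "x + y \<noteq> 0"
  proof
    assume "x + y = 0" then have "y = - x" by (rule minus_unique[symmetric])
    then show False using lt by simp
  qed
  have g: "v x \<le> v (x + y)" using vadd[OF assms(1) False ne] lt by simp
  have e: "x + y + - y = x" by simp
  have ny: "- y \<noteq> 0" using False by simp
  have m0: "min (v (x + y)) (v (-y)) \<le> v (x + y + - y)"
    by (rule vadd[OF ne ny]) (simp add: assms(1))
  have m: "min (v (x + y)) (v (-y)) \<le> v x" using m0 e by (simp only:)
  have "v (x + y) \<le> v x" using m lt by (metis min_le_iff_disj not_le vneg)
  then show ?thesis using g by (rule antisym)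
next
  case True then show ?thesis by (simp only: add_0_right)
qed

lemma strict_ultra': "x \<noteq> 0 \<Longrightarrow> vgt (y - x) (v x) \<Longrightarrow> v y = v x"
proof -
  assume a: "x \<noteq> 0" "vgt (y - x) (v x)"
  have "v (x + (y - x)) = v x" by (rule strict_ultra[OF a])
  then show ?thesis by simp
qed

end

context val begin

definition Bnd :: "'a poly \<Rightarrow> 'g \<Rightarrow> 'g \<Rightarrow> bool" where
  "Bnd p \<gamma> m \<longleftrightarrow> (\<forall>n. vge (coeff p n) (m - nmult n \<gamma>))"

definition G :: "'a poly \<Rightarrow> 'g \<Rightarrow> 'g" where
  "G p \<gamma> = Min {v (coeff p n) + nmult n \<gamma> | n. coeff p n \<noteq> 0}"

lemma Gset_finite: "finite {v (coeff p n) + nmult n \<gamma> | n. coeff p n \<noteq> 0}"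
proof -
  have "{v (coeff p n) + nmult n \<gamma> | n. coeff p n \<noteq> 0} \<subseteq> (\<lambda>n. v (coeff p n) + nmult n \<gamma>) ` {..degree p}"
    using le_degree by fastforce
  then show ?thesis by (rule finite_subset) simp
qed

lemma Gset_ne: "p \<noteq> 0 \<Longrightarrow> {v (coeff p n) + nmult n \<gamma> | n. coeff p n \<noteq> 0} \<noteq> {}"
  using leading_coeff_neq_0 by blast

lemma G_Bnd: assumes "p \<noteq> 0" shows "Bnd p \<gamma> (G p \<gamma>)"
  unfolding Bnd_def vge_def
proof (intro allI impI)
  fix n assume "coeff p n \<noteq> 0"
  then have "G p \<gamma> \<le> v (coeff p n) + nmult n \<gamma>"
    unfolding G_def using Gset_finite by (intro Min_le) auto
  then show "G p \<gamma> - nmult n \<gamma> \<le> v (coeff p n)" by (simp add: diff_le_eq)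
qed

lemma G_attained: assumes "p \<noteq> 0"
  shows "\<exists>n. coeff p n \<noteq> 0 \<and> G p \<gamma> = v (coeff p n) + nmult n \<gamma>"
proof -
  have "G p \<gamma> \<in> {v (coeff p n) + nmult n \<gamma> | n. coeff p n \<noteq> 0}"
    unfolding G_def using Gset_finite Gset_ne[OF assms] by (rule Min_in)
  then show ?thesis by blast
qed

lemma G_ge: assumes "p \<noteq> 0" "Bnd p \<gamma> m" shows "m \<le> G p \<gamma>"
proof -
  obtain n where n: "coeff p n \<noteq> 0" "G p \<gamma> = v (coeff p n) + nmult n \<gamma>"
    using G_attained[OF assms(1)] by blast
  have "m - nmult n \<gamma> \<le> v (coeff p n)" using assms(2) n(1) by (simp add: Bnd_def vge_def)
  then show ?thesis using n(2) by (simp add: diff_le_eq)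
qed

lemma G_eq: assumes "Bnd p \<gamma> m" "coeff p n \<noteq> 0" "m = v (coeff p n) + nmult n \<gamma>"
  shows "G p \<gamma> = m"
proof -
  have p: "p \<noteq> 0" using assms(2) by auto
  have "G p \<gamma> \<le> m" unfolding G_def assms(3) using Gset_finite assms(2) by (intro Min_le) auto
  then show ?thesis using G_ge[OF p assms(1)] by (rule antisym)
qed

lemma Bnd_pCons: "Bnd (pCons a p) \<gamma> m \<longleftrightarrow> vge a m \<and> Bnd p \<gamma> (m - \<gamma>)"
proof -
  have "(\<forall>n. vge (coeff (pCons a p) n) (m - nmult n \<gamma>)) \<longleftrightarrow>
        vge a m \<and> (\<forall>n. vge (coeff (pCons a p) (Suc n)) (m - nmult (Suc n) \<gamma>))"
    by (metis diff_zero nat.exhaust coeff_pCons_0 nmult.simps(1))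
  also have "(\<lambda>n. m - nmult (Suc n) \<gamma>) = (\<lambda>n. m - \<gamma> - nmult n \<gamma>)"
    by (simp add: algebra_simps)
  finally show ?thesis by (simp add: Bnd_def)
qed

lemma Bnd_mono: "Bnd p \<gamma> m \<Longrightarrow> \<gamma> \<le> \<gamma>' \<Longrightarrow> Bnd p \<gamma>' m"
  unfolding Bnd_def
  by (meson diff_left_mono nmult_mono vge_mono)

lemma Bnd_shift: assumes "Bnd p \<gamma> m" "vge d \<gamma>"
  shows "Bnd (p \<circ>\<^sub>p [:d, 1:]) \<gamma> m"
  using assms(1)
proof (induction p arbitrary: m)
  case 0 then show ?case by (simp add: Bnd_def)
next
  case (pCons a p)
  define r where "r = p \<circ>\<^sub>p [:d, 1:]"
  have a: "vge a m" and bp: "Bnd p \<gamma> (m - \<gamma>)" using pCons.prems Bnd_pCons by auto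
  have br: "Bnd r \<gamma> (m - \<gamma>)" using pCons.IH[OF bp] by (simp add: r_def)
  have eq: "pCons a p \<circ>\<^sub>p [:d, 1:] = [:a:] + smult d r + pCons 0 r"
    by (simp add: pcompose_pCons r_def mult_pCons_left)
  show ?case unfolding Bnd_def eq
  proof
    fix n
    show "vge (coeff ([:a:] + smult d r + pCons 0 r) n) (m - nmult n \<gamma>)"
    proof (cases n)
      case 0
      have "vge (coeff r 0) (m - \<gamma> - nmult 0 \<gamma>)" using br unfolding Bnd_def by blast
      then have "vge (d * coeff r 0) (\<gamma> + (m - \<gamma> - nmult 0 \<gamma>))"
        using assms(2) by (intro vge_multI)
      then have "vge (d * coeff r 0) m" by simp
      then show ?thesis using 0 a by (simp add: vge_add)
    next
      case (Suc k)
      have "vge (coeff r n) (m - \<gamma> - nmult n \<gamma>)" using br unfolding Bnd_def by blast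
      then have "vge (d * coeff r n) (\<gamma> + (m - \<gamma> - nmult n \<gamma>))"
        using assms(2) by (intro vge_multI)
      then have 1: "vge (d * coeff r n) (m - nmult n \<gamma>)" by (simp add: algebra_simps)
      have "vge (coeff r k) (m - \<gamma> - nmult k \<gamma>)" using br by (simp add: Bnd_def)
      then have 2: "vge (coeff r k) (m - nmult n \<gamma>)" using Suc by (simp add: algebra_simps)
      show ?thesis using 1 2 Suc by (simp add: vge_add)
    qed
  qed
qed

end

context val begin

lemma pc_ne0: "(f::'a poly) \<noteq> 0 \<Longrightarrow> f \<circ>\<^sub>p [:a, 1:] \<noteq> 0"
  using pcompose_eq_0[of f "[:a, 1:]"] by auto

lemma oc_G: "f \<noteq> 0 \<Longrightarrow> omega_center v a \<gamma> f = G (f \<circ>\<^sub>p [:a, 1:]) \<gamma>"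
  unfolding omega_center_def G_def by simp

lemma oc_0[simp]: "omega_center v a \<gamma> 0 = 0"
  unfolding omega_center_def by simp

lemma oc_center_le: assumes "vge (b - a) \<gamma>"
  shows "omega_center v a \<gamma> f \<le> omega_center v b \<gamma> f"
proof (cases "f = 0")
  case False
  define pa where "pa = f \<circ>\<^sub>p [:a, 1:]"
  have e: "[:a, 1:] \<circ>\<^sub>p [:b - a, 1:] = [:b, 1:]" by (simp add: pcompose_pCons)
  have pb: "f \<circ>\<^sub>p [:b, 1:] = pa \<circ>\<^sub>p [:b - a, 1:]"
    unfolding pa_def pcompose_assoc[symmetric] e ..
  have pa0: "pa \<noteq> 0" using pc_ne0[OF False] pa_def by simp
  have "Bnd (pa \<circ>\<^sub>p [:b - a, 1:]) \<gamma> (G pa \<gamma>)"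
    by (rule Bnd_shift[OF G_Bnd[OF pa0] assms])
  then have "G pa \<gamma> \<le> G (f \<circ>\<^sub>p [:b, 1:]) \<gamma>"
    using pb pc_ne0[OF False, of b] by (intro G_ge) simp_all
  then show ?thesis using False by (simp add: oc_G pa_def)
qed simp

lemma oc_center: assumes "vge (b - a) \<gamma>"
  shows "omega_center v a \<gamma> f = omega_center v b \<gamma> f"
proof -
  have "vge (a - b) \<gamma>" using assms vge_neg[of "a - b"] by simp
  then show ?thesis using oc_center_le assms by (metis antisym)
qed

lemma oc_mono: assumes "\<gamma> \<le> \<gamma>'"
  shows "omega_center v a \<gamma> f \<le> omega_center v a \<gamma>' f"
proof (cases "f = 0")
  case False
  have p: "f \<circ>\<^sub>p [:a, 1:] \<noteq> 0" using pc_ne0[OF False] .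
  show ?thesis using False
    by (simp add: oc_G G_ge[OF p Bnd_mono[OF G_Bnd[OF p] assms]])
qed simp

end

locale aval = val v for v :: "'a::alg_closed_field \<Rightarrow> 'g::linordered_ab_group_add"
begin

lemma Lroots:
  assumes "p \<noteq> 0" "\<And>r. poly p r = 0 \<Longrightarrow> r \<noteq> 0 \<and> v r < \<gamma>"
  shows "coeff p 0 \<noteq> 0 \<and> (\<forall>n>0. vgt (coeff p n) (v (coeff p 0) - nmult n \<gamma>))"
  using assms
proof (induction "degree p" arbitrary: p rule: less_induct)
  case (less p)
  show ?case
  proof (cases "degree p = 0")
    case True
    then obtain c where "p = [:c:]" by (rule degree_eq_zeroE)
    then have "p = [:coeff p 0:]" by simp
    then have "coeff p 0 \<noteq> 0" using less.prems(1) by (metis pCons_0_0)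
    moreover have "coeff p n = 0" if "n > 0" for n using True that by (intro coeff_eq_0) simp
    ultimately show ?thesis by simp
  next
    case False
    then obtain s where s: "poly p s = 0" using alg_closed_imp_poly_has_root by blast
    then obtain q where pq: "p = [:-s, 1:] * q" using poly_eq_0_iff_dvd by (metis dvdE)
    have q0: "q \<noteq> 0" using less.prems(1) pq by auto
    have "degree ([:-s, 1:] * q) = degree [:-s, 1:] + degree q"
      by (rule degree_mult_eq) (simp_all add: q0)
    then have dq: "degree q < degree p" using pq by simp
    have sv: "s \<noteq> 0" "v s < \<gamma>" using less.prems(2)[OF s] by auto
    have qr: "r \<noteq> 0 \<and> v r < \<gamma>" if "poly q r = 0" for r
      using less.prems(2)[of r] that pq by simp
    have IH: "coeff q 0 \<noteq> 0 \<and> (\<forall>n>0. vgt (coeff q n) (v (coeff q 0) - nmult n \<gamma>))"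
      using less.hyps[OF dq q0 qr] by blast
    have pe: "p = smult (-s) q + pCons 0 q" using pq by (simp add: mult_pCons_left)
    have c0: "coeff p 0 = - s * coeff q 0" using pe by simp
    have cS: "coeff p (Suc k) = - s * coeff q (Suc k) + coeff q k" for k using pe by simp
    have p0: "coeff p 0 \<noteq> 0" using c0 IH sv by simp
    have vp0: "v (coeff p 0) = v s + v (coeff q 0)" using c0 IH sv by (simp add: vmult)
    have "vgt (coeff p n) (v (coeff p 0) - nmult n \<gamma>)" if n: "n > 0" for n
    proof -
      obtain k where k: "n = Suc k" using n gr0_implies_Suc by blast
      have "vgt (coeff q n) (v (coeff q 0) - nmult n \<gamma>)" using IH n by blast
      then have "vgt (coeff q n * (- s)) (v (coeff q 0) - nmult n \<gamma> + v s)"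
        by (rule vgt_multI) (simp add: vge_def)
      then have t1: "vgt (- s * coeff q n) (v (coeff p 0) - nmult n \<gamma>)"
        by (simp add: vp0 algebra_simps)
      have t2: "vgt (coeff q k) (v (coeff p 0) - nmult n \<gamma>)"
      proof (cases "k = 0")
        case True
        have "v s - \<gamma> < 0" using sv(2) by simp
        then have "v s + v (coeff q 0) - \<gamma> < v (coeff q 0)"
          by (simp add: algebra_simps)
        then show ?thesis using True k by (simp add: vgt_def vp0)
      next
        case False
        have "vgt (coeff q k) (v (coeff q 0) - nmult k \<gamma>)" using IH False by blast
        moreover have "v s + v (coeff q 0) - (\<gamma> + nmult k \<gamma>) \<le> v (coeff q 0) - nmult k \<gamma>"
        proof -
          have "v s - \<gamma> \<le> 0" using sv(2) by simp
          then show ?thesis by (simp add: algebra_simps)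
        qed
        ultimately show ?thesis using k by (simp add: vp0 vgt_mono)
      qed
      show ?thesis using vgt_add[OF t1 t2] k by (simp add: cS)
    qed
    then show ?thesis using p0 by blast
  qed
qed

end

context val begin

lemma vgt_sum: "(\<And>i. i \<in> A \<Longrightarrow> vgt (f i) m) \<Longrightarrow> vgt (sum f A) m"
proof (induction A rule: infinite_finite_induct)
  case (insert x F) then show ?case by (simp add: vgt_add)
qed simp_all

lemma vge_iff_cball: "c \<in> cball_v v a \<gamma> \<longleftrightarrow> vge (c - a) \<gamma>"
  by (auto simp: cball_v_def vge_def)

lemma cball_recenter: assumes "b \<in> cball_v v a \<gamma>" shows "cball_v v b \<gamma> = cball_v v a \<gamma>"
proof -
  have ba: "vge (b - a) \<gamma>" using assms vge_iff_cball by blast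
  have "vge (c - b) \<gamma> \<longleftrightarrow> vge (c - a) \<gamma>" for c
  proof
    assume "vge (c - b) \<gamma>" then show "vge (c - a) \<gamma>" using vge_add[OF _ ba] by fastforce
  next
    assume "vge (c - a) \<gamma>" then show "vge (c - b) \<gamma>" using vge_diff[OF _ ba] by fastforce
  qed
  then show ?thesis using vge_iff_cball by blast
qed

lemma center_in: "a \<in> cball_v v a \<gamma>" by (simp add: cball_v_def)

lemma vg_witness: "\<gamma> \<in> value_group v \<Longrightarrow> \<exists>d. d \<noteq> 0 \<and> v d = \<gamma>"
  by (auto simp: value_group_def)

lemma cball_sub_radius:
  assumes "\<gamma> \<in> value_group v" "cball_v v a \<gamma> \<subseteq> cball_v v b \<gamma>'"
  shows "\<gamma>' \<le> \<gamma>"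
proof -
  obtain d where d: "d \<noteq> 0" "v d = \<gamma>" using vg_witness[OF assms(1)] by blast
  have "a + d \<in> cball_v v a \<gamma>" using d by (simp add: cball_v_def)
  then have ad: "a + d \<in> cball_v v b \<gamma>'" using assms(2) by blast
  have "a \<in> cball_v v b \<gamma>'" using assms(2) center_in by blast
  then have "cball_v v a \<gamma>' = cball_v v b \<gamma>'" by (rule cball_recenter)
  then have "a + d \<in> cball_v v a \<gamma>'" using ad by simp
  then show ?thesis using d by (simp add: cball_v_def)
qed

lemma cball_radius_eq:
  assumes "\<gamma> \<in> value_group v" "\<gamma>' \<in> value_group v" "cball_v v a \<gamma> = cball_v v b \<gamma>'"
  shows "\<gamma> = \<gamma>'"
  using cball_sub_radius[OF assms(1)] cball_sub_radius[OF assms(2)] assms(3)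
  by (metis antisym order_refl)

lemma omega_ball_eq: assumes "\<gamma> \<in> value_group v"
  shows "omega_ball v (cball_v v a \<gamma>) f = omega_center v a \<gamma> f"
  unfolding omega_ball_def
proof (rule some_equality)
  show "\<exists>a' \<gamma>'. \<gamma>' \<in> value_group v \<and> cball_v v a \<gamma> = cball_v v a' \<gamma>' \<and>
      omega_center v a \<gamma> f = omega_center v a' \<gamma>' f" using assms by blast
next
  fix w assume "\<exists>a' \<gamma>'. \<gamma>' \<in> value_group v \<and> cball_v v a \<gamma> = cball_v v a' \<gamma>' \<and>
      w = omega_center v a' \<gamma>' f"
  then obtain a' \<gamma>' where h: "\<gamma>' \<in> value_group v" "cball_v v a \<gamma> = cball_v v a' \<gamma>'"
      "w = omega_center v a' \<gamma>' f" by blast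
  have g: "\<gamma>' = \<gamma>" using cball_radius_eq[OF assms h(1) h(2)] by simp
  have "a \<in> cball_v v a' \<gamma>'" using h(2) center_in by blast
  then have "vge (a - a') \<gamma>'" using vge_iff_cball by blast
  then show "w = omega_center v a \<gamma> f" using h(3) g oc_center by simp
qed

end

context aval begin

lemma L1:
  assumes "f \<noteq> 0" "\<And>r. poly f r = 0 \<Longrightarrow> r \<noteq> b \<and> v (r - b) < \<gamma>"
  shows "omega_center v b \<gamma> f = v (poly f b)"
proof -
  define p where "p = f \<circ>\<^sub>p [:b, 1:]"
  have p0: "p \<noteq> 0" using pc_ne0[OF assms(1)] p_def by simp
  have pr: "poly p r = poly f (b + r)" for r by (simp add: p_def poly_pcompose)
  have "r \<noteq> 0 \<and> v r < \<gamma>" if "poly p r = 0" for r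
    using assms(2)[of "b + r"] that pr by simp
  then have L: "coeff p 0 \<noteq> 0 \<and> (\<forall>n>0. vgt (coeff p n) (v (coeff p 0) - nmult n \<gamma>))"
    using Lroots[OF p0] by blast
  have "Bnd p \<gamma> (v (coeff p 0))" unfolding Bnd_def
  proof
    fix n show "vge (coeff p n) (v (coeff p 0) - nmult n \<gamma>)"
    proof (cases n)
      case (Suc k)
      then have "vgt (coeff p n) (v (coeff p 0) - nmult n \<gamma>)" using L by blast
      then show ?thesis by (rule vgt_vge)
    qed (simp add: vge_def)
  qed
  then have "G p \<gamma> = v (coeff p 0)" using L by (intro G_eq[of _ _ _ 0]) simp_all
  moreover have "coeff p 0 = poly f b" using pr[of 0] by (simp add: poly_0_coeff_0[symmetric])
  ultimately show ?thesis using assms(1) by (simp add: oc_G p_def)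
qed

lemma L2:
  assumes "f \<noteq> 0" "\<And>r. poly f r = 0 \<Longrightarrow> r \<noteq> b \<and> v (r - b) < \<gamma>" "vge (e - b) \<gamma>"
  shows "vgt (poly f e - poly f b) (v (poly f b))"
proof -
  define p where "p = f \<circ>\<^sub>p [:b, 1:]"
  define d where "d = e - b"
  have p0: "p \<noteq> 0" using pc_ne0[OF assms(1)] p_def by simp
  have pr: "poly p r = poly f (b + r)" for r by (simp add: p_def poly_pcompose)
  have "r \<noteq> 0 \<and> v r < \<gamma>" if "poly p r = 0" for r
    using assms(2)[of "b + r"] that pr by simp
  then have L: "coeff p 0 \<noteq> 0 \<and> (\<forall>n>0. vgt (coeff p n) (v (coeff p 0) - nmult n \<gamma>))"
    using Lroots[OF p0] by blast
  have c0: "coeff p 0 = poly f b" using pr[of 0] by (simp add: poly_0_coeff_0[symmetric])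
  have "poly f e = poly p d" using pr[of d] by (simp add: d_def)
  also have "\<dots> = coeff p 0 + (\<Sum>i<degree p. coeff p (Suc i) * d ^ Suc i)"
    unfolding poly_altdef sum.atMost_shift by simp
  finally have e: "poly f e - poly f b = (\<Sum>i<degree p. coeff p (Suc i) * d ^ Suc i)"
    using c0 by simp
  have "vgt (coeff p (Suc i) * d ^ Suc i) (v (poly f b))" for i
  proof (cases "d = 0")
    case False
    have "vgt (coeff p (Suc i)) (v (coeff p 0) - nmult (Suc i) \<gamma>)" using L by blast
    moreover have "vge (d ^ Suc i) (nmult (Suc i) \<gamma>)"
    proof -
      have "\<gamma> \<le> v d" using assms(3) False by (simp add: vge_def d_def)
      then have "nmult (Suc i) \<gamma> \<le> v (d ^ Suc i)" using False vpow[OF False, of "Suc i"] nmult_mono by metis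
      then show ?thesis by (simp add: vge_def)
    qed
    ultimately have "vgt (coeff p (Suc i) * d ^ Suc i) (v (coeff p 0) - nmult (Suc i) \<gamma> + nmult (Suc i) \<gamma>)"
      by (rule vgt_multI)
    then show ?thesis using c0 by simp
  qed simp
  then show ?thesis unfolding e by (intro vgt_sum)
qed

lemma L2': assumes "f \<noteq> 0" "\<And>r. poly f r = 0 \<Longrightarrow> r \<noteq> b \<and> v (r - b) < \<gamma>" "vge (e - b) \<gamma>"
  shows "v (poly f e) = v (poly f b)"
proof -
  have "poly f b \<noteq> 0" using assms(2)[of b] by auto
  then show ?thesis using strict_ultra'[OF _ L2[OF assms]] by simp
qed

end

context aval begin

lemma nestD:
  assumes "N \<in> nests_inf v"
  shows "N \<noteq> {}" "\<And>B. B \<in> N \<Longrightarrow> \<exists>a \<gamma>. \<gamma> \<in> value_group v \<and> B = cball_v v a \<gamma>"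
    "\<And>B C. B \<in> N \<Longrightarrow> C \<in> N \<Longrightarrow> B \<subseteq> C \<or> C \<subseteq> B" "\<Inter> N = {}"
  using assms unfolding nests_inf_def is_closed_ball_def by blast+

lemma nest_point: "N \<in> nests_inf v \<Longrightarrow> B \<in> N \<Longrightarrow> \<exists>b. b \<in> B"
  using nestD(2) center_in by blast

lemma avoid:
  assumes N: "N \<in> nests_inf v" and "finite S"
  shows "\<exists>B\<in>N. B \<inter> S = {}"
  using assms(2)
proof (induction S rule: finite_induct)
  case empty then show ?case using nestD(1)[OF N] by blast
next
  case (insert x S)
  then obtain B1 where B1: "B1 \<in> N" "B1 \<inter> S = {}" by blast
  have "x \<notin> \<Inter> N" using nestD(4)[OF N] by blast
  then obtain B2 where B2: "B2 \<in> N" "x \<notin> B2" by blast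
  show ?case
  proof (cases "B1 \<subseteq> B2")
    case True then show ?thesis using B1 B2 by (intro bexI[of _ B1]) auto
  next
    case False
    then have "B2 \<subseteq> B1" using nestD(3)[OF N B1(1) B2(1)] by blast
    then show ?thesis using B1 B2 by (intro bexI[of _ B2]) auto
  qed
qed

lemma avoid_roots:
  assumes N: "N \<in> nests_inf v" and "f \<noteq> 0"
  shows "\<exists>B\<in>N. \<forall>r\<in>B. poly f r \<noteq> 0"
  using avoid[OF N poly_roots_finite[OF assms(2)]] by blast

lemma ball_root_free:
  assumes "\<gamma> \<in> value_group v" "b \<in> cball_v v a \<gamma>" "\<forall>r\<in>cball_v v a \<gamma>. poly f r \<noteq> 0"
  shows "\<And>r. poly f r = 0 \<Longrightarrow> r \<noteq> b \<and> v (r - b) < \<gamma>"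
proof -
  fix r assume r: "poly f r = 0"
  have e: "cball_v v b \<gamma> = cball_v v a \<gamma>" using cball_recenter[OF assms(2)] .
  have "r \<notin> cball_v v b \<gamma>" using assms(3) r e by blast
  then show "r \<noteq> b \<and> v (r - b) < \<gamma>" by (simp add: cball_v_def not_le)
qed

lemma deep_val:
  assumes N: "N \<in> nests_inf v" and f: "f \<noteq> 0" and B0: "B0 \<in> N" "\<forall>r\<in>B0. poly f r \<noteq> 0"
    and b: "b \<in> B0"
  shows "omega_nest_poly v N f = v (poly f b)"
  unfolding omega_nest_poly_def
proof (rule the_equality)
  obtain a0 \<gamma>0 where g0: "\<gamma>0 \<in> value_group v" "B0 = cball_v v a0 \<gamma>0" using nestD(2)[OF N B0(1)] by blast
  have eB0: "B0 = cball_v v b \<gamma>0" using cball_recenter[of b a0 \<gamma>0] b g0 by simp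
  have rf: "\<And>r. poly f r = 0 \<Longrightarrow> r \<noteq> b \<and> v (r - b) < \<gamma>0"
    using ball_root_free[OF g0(1), of b b f] B0(2) eB0 center_in by blast
  have ob0: "omega_ball v B0 f = v (poly f b)"
    using eB0 omega_ball_eq[OF g0(1)] L1[OF f rf] by simp
  have le: "omega_ball v B f \<le> v (poly f b)" if B: "B \<in> N" for B
  proof -
    obtain a \<gamma> where g: "\<gamma> \<in> value_group v" "B = cball_v v a \<gamma>" using nestD(2)[OF N B] by blast
    show ?thesis
    proof (cases "B \<subseteq> B0")
      case True
      have aB0: "a \<in> B0" using True g center_in by blast
      have "\<forall>r\<in>cball_v v a \<gamma>. poly f r \<noteq> 0" using True g B0(2) by blast
      then have rfa: "\<And>r. poly f r = 0 \<Longrightarrow> r \<noteq> a \<and> v (r - a) < \<gamma>"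
        using ball_root_free[OF g(1), of a a f] center_in by blast
      have "omega_ball v B f = v (poly f a)" using g omega_ball_eq L1[OF f rfa] by simp
      also have "\<dots> = v (poly f b)"
        using L2'[OF f rf] aB0 eB0 vge_iff_cball by blast
      finally show ?thesis by simp
    next
      case False
      then have sub: "B0 \<subseteq> B" using nestD(3)[OF N B B0(1)] by blast
      then have "b \<in> cball_v v a \<gamma>" using b g by blast
      then have eB: "B = cball_v v b \<gamma>" using cball_recenter g by simp
      have "\<gamma> \<le> \<gamma>0" using cball_sub_radius[OF g0(1), of b b \<gamma>] sub eB eB0 by simp
      then have "omega_center v b \<gamma> f \<le> omega_center v b \<gamma>0 f" by (rule oc_mono)
      then show ?thesis using eB omega_ball_eq[OF g(1)] L1[OF f rf] by simp
    qed
  qed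
  have mem: "v (poly f b) \<in> {omega_ball v B f |B. B \<in> N}" using ob0[symmetric] B0(1) by blast
  show "v (poly f b) \<in> {omega_ball v B f |B. B \<in> N} \<and>
    (\<forall>u\<in>{omega_ball v B f |B. B \<in> N}. u \<le> v (poly f b))"
  proof
    show "v (poly f b) \<in> {omega_ball v B f |B. B \<in> N}" by (rule mem)
    show "\<forall>u\<in>{omega_ball v B f |B. B \<in> N}. u \<le> v (poly f b)" using le by blast
  qed
  fix w assume w: "w \<in> {omega_ball v B f |B. B \<in> N} \<and> (\<forall>u\<in>{omega_ball v B f |B. B \<in> N}. u \<le> w)"
  then have "v (poly f b) \<le> w" using mem by blast
  moreover have "w \<le> v (poly f b)" using w le by blast
  ultimately show "w = v (poly f b)" by (rule antisym[rotated])
qed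

lemma onp_0: assumes N: "N \<in> nests_inf v" shows "omega_nest_poly v N 0 = 0"
  unfolding omega_nest_poly_def
proof (rule the_equality)
  have z: "omega_ball v B 0 = 0" if B: "B \<in> N" for B
  proof -
    obtain a \<gamma> where "\<gamma> \<in> value_group v" "B = cball_v v a \<gamma>" using nestD(2)[OF N B] by blast
    then show ?thesis using omega_ball_eq oc_0 by simp
  qed
  obtain B where "B \<in> N" using nestD(1)[OF N] by blast
  then show "0 \<in> {omega_ball v B 0 |B. B \<in> N} \<and> (\<forall>u\<in>{omega_ball v B 0 |B. B \<in> N}. u \<le> 0)"
    using z by auto
  show "\<And>w. w \<in> {omega_ball v B 0 |B. B \<in> N} \<and> (\<forall>u\<in>{omega_ball v B 0 |B. B \<in> N}. u \<le> w) \<Longrightarrow> w = 0"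
    using z by auto
qed

lemma deep_exists:
  assumes N: "N \<in> nests_inf v" and f: "f \<noteq> 0"
  shows "\<exists>B0\<in>N. (\<forall>b\<in>B0. omega_nest_poly v N f = v (poly f b) \<and> poly f b \<noteq> 0) \<and> (\<exists>b. b \<in> B0)"
proof -
  obtain B0 where B0: "B0 \<in> N" "\<forall>r\<in>B0. poly f r \<noteq> 0" using avoid_roots[OF N f] by blast
  have "\<forall>b\<in>B0. omega_nest_poly v N f = v (poly f b) \<and> poly f b \<noteq> 0"
    using deep_val[OF N f B0] B0(2) by blast
  moreover have "\<exists>b. b \<in> B0" using nest_point[OF N B0(1)] .
  ultimately show ?thesis using B0(1) by blast
qed

end

context aval begin

lemma common_ball:
  assumes N: "N \<in> nests_inf v" and f: "f \<noteq> 0"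
  shows "\<exists>B0\<in>N. \<forall>r\<in>B0. poly f r \<noteq> 0"
  using avoid_roots[OF N f] .

lemma onp_mult: assumes N: "N \<in> nests_inf v" and f: "f \<noteq> 0" and g: "g \<noteq> 0"
  shows "omega_nest_poly v N (f * g) = omega_nest_poly v N f + omega_nest_poly v N g"
proof -
  have fg: "f * g \<noteq> 0" using f g by simp
  obtain B0 where B0: "B0 \<in> N" "\<forall>r\<in>B0. poly (f * g) r \<noteq> 0" using avoid_roots[OF N fg] by blast
  obtain b where b: "b \<in> B0" using nest_point[OF N B0(1)] by blast
  have rf: "\<forall>r\<in>B0. poly f r \<noteq> 0" and rg: "\<forall>r\<in>B0. poly g r \<noteq> 0" using B0(2) by auto
  have "omega_nest_poly v N (f * g) = v (poly f b * poly g b)"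
    using deep_val[OF N fg B0 b] by simp
  also have "\<dots> = v (poly f b) + v (poly g b)" using rf rg b by (simp add: vmult)
  finally show ?thesis using deep_val[OF N f B0(1) rf b] deep_val[OF N g B0(1) rg b] by simp
qed

lemma onp_add: assumes N: "N \<in> nests_inf v" and f: "f \<noteq> 0" and g: "g \<noteq> 0" and fg: "f + g \<noteq> 0"
  shows "min (omega_nest_poly v N f) (omega_nest_poly v N g) \<le> omega_nest_poly v N (f + g)"
proof -
  have p: "f * g * (f + g) \<noteq> 0" using f g fg by simp
  obtain B0 where B0: "B0 \<in> N" "\<forall>r\<in>B0. poly (f * g * (f + g)) r \<noteq> 0" using avoid_roots[OF N p] by blast
  obtain b where b: "b \<in> B0" using nest_point[OF N B0(1)] by blast
  have rf: "\<forall>r\<in>B0. poly f r \<noteq> 0" and rg: "\<forall>r\<in>B0. poly g r \<noteq> 0"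
    and rfg: "\<forall>r\<in>B0. poly (f + g) r \<noteq> 0" using B0(2) by auto
  have "min (v (poly f b)) (v (poly g b)) \<le> v (poly f b + poly g b)"
    using rf rg rfg b by (intro vadd) auto
  then show ?thesis using deep_val[OF N f B0(1) rf b] deep_val[OF N g B0(1) rg b]
      deep_val[OF N fg B0(1) rfg b] by simp
qed

lemma onp_const: assumes N: "N \<in> nests_inf v" shows "omega_nest_poly v N [:c:] = v c"
proof (cases "c = 0")
  case True then show ?thesis using onp_0[OF N] by simp
next
  case False
  then have c: "[:c:] \<noteq> 0" by simp
  obtain B0 where B0: "B0 \<in> N" "\<forall>r\<in>B0. poly [:c:] r \<noteq> 0" using avoid_roots[OF N c] by blast
  obtain b where b: "b \<in> B0" using nest_point[OF N B0(1)] by blast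
  show ?thesis using deep_val[OF N c B0 b] by simp
qed

lemma onp_1: assumes N: "N \<in> nests_inf v" shows "omega_nest_poly v N 1 = 0"
  using onp_const[OF N, of 1] by (simp add: one_pCons)

lemma fract_ne0: "f \<noteq> 0 \<Longrightarrow> g \<noteq> 0 \<Longrightarrow> Fract f g \<noteq> (0 :: 'a poly fract)"
  by (simp add: Zero_fract_def eq_fract)

lemma on_Fract: assumes N: "N \<in> nests_inf v" and f: "f \<noteq> 0" and g: "g \<noteq> 0"
  shows "omega_nest v N (Fract f g) = omega_nest_poly v N f - omega_nest_poly v N g"
proof -
  have q: "Fract f g \<noteq> 0" using fract_ne0[OF f g] .
  show ?thesis unfolding omega_nest_def if_not_P[OF q]
  proof (rule some_equality)
    show "\<exists>f' g'. g' \<noteq> 0 \<and> Fract f g = Fract f' g' \<and>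
      omega_nest_poly v N f - omega_nest_poly v N g = omega_nest_poly v N f' - omega_nest_poly v N g'"
      using g by blast
  next
    fix w assume "\<exists>f' g'. g' \<noteq> 0 \<and> Fract f g = Fract f' g' \<and> w = omega_nest_poly v N f' - omega_nest_poly v N g'"
    then obtain f' g' where h: "g' \<noteq> 0" "Fract f g = Fract f' g'" "w = omega_nest_poly v N f' - omega_nest_poly v N g'"
      by blast
    have e: "f * g' = f' * g" using h(1,2) g by (simp add: eq_fract)
    have f': "f' \<noteq> 0" using e f g h(1) by auto
    have "omega_nest_poly v N f + omega_nest_poly v N g' = omega_nest_poly v N f' + omega_nest_poly v N g"
      using onp_mult[OF N f h(1)] onp_mult[OF N f' g] e by simp
    then show "w = omega_nest_poly v N f - omega_nest_poly v N g" using h(3)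
      by (simp add: algebra_simps) (metis add_diff_cancel diff_add_eq)
  qed
qed

end

lemma sum_le1: "(\<Sum>i\<le>(1::nat). F i) = F 0 + (F 1 :: 'b::comm_monoid_add)"
  by (simp add: numeral_eq_Suc sum.atMost_Suc)

lemma const_fract_0[simp]: "const_fract 0 = 0" by (simp add: const_fract_def fract_collapse)
lemma const_fract_1[simp]: "const_fract 1 = 1"
  unfolding const_fract_def one_pCons[symmetric] by (rule fract_collapse(2))

context aval begin

lemma fract_nz_cases:
  assumes "q \<noteq> (0 :: 'a poly fract)"
  obtains f g where "f \<noteq> 0" "g \<noteq> 0" "q = Fract f g"
  using assms by (cases q rule: Fract_cases_nonzero) auto

lemma on_isv: assumes N: "N \<in> nests_inf v" shows "is_valuation (omega_nest v N)"
  unfolding is_valuation_def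
proof (intro conjI allI impI)
  show "omega_nest v N 0 = 0" by (simp add: omega_nest_def)
next
  fix a b :: "'a poly fract" assume a: "a \<noteq> 0" and b: "b \<noteq> 0"
  obtain f g where fg: "f \<noteq> 0" "g \<noteq> 0" "a = Fract f g" using fract_nz_cases[OF a] by blast
  obtain f' g' where fg': "f' \<noteq> 0" "g' \<noteq> 0" "b = Fract f' g'" using fract_nz_cases[OF b] by blast
  have ab: "a * b = Fract (f * f') (g * g')" using fg fg' by simp
  show "omega_nest v N (a * b) = omega_nest v N a + omega_nest v N b"
    unfolding ab using fg fg'
    by (simp add: on_Fract[OF N] onp_mult[OF N] algebra_simps)
next
  fix a b :: "'a poly fract" assume a: "a \<noteq> 0" and b: "b \<noteq> 0" and s: "a + b \<noteq> 0"
  obtain f g where fg: "f \<noteq> 0" "g \<noteq> 0" "a = Fract f g" using fract_nz_cases[OF a] by blast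
  obtain f' g' where fg': "f' \<noteq> 0" "g' \<noteq> 0" "b = Fract f' g'" using fract_nz_cases[OF b] by blast
  have ab: "a + b = Fract (f * g' + f' * g) (g * g')" using fg fg' by simp
  have sn: "f * g' + f' * g \<noteq> 0" using s ab by (auto simp: fract_collapse)
  have m: "min (omega_nest_poly v N (f * g')) (omega_nest_poly v N (f' * g))
       \<le> omega_nest_poly v N (f * g' + f' * g)"
    using fg fg' sn by (intro onp_add[OF N]) simp_all
  define c where "c = omega_nest_poly v N g + omega_nest_poly v N g'"
  have "min (omega_nest_poly v N (f * g')) (omega_nest_poly v N (f' * g)) - c
       \<le> omega_nest_poly v N (f * g' + f' * g) - c" using m by (rule diff_right_mono)
  then show "min (omega_nest v N a) (omega_nest v N b) \<le> omega_nest v N (a + b)"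
    unfolding ab min_diff_distrib_left using fg fg' sn
    by (simp add: on_Fract[OF N] onp_mult[OF N] c_def algebra_simps)
qed

lemma on_const: assumes N: "N \<in> nests_inf v" shows "omega_nest v N (const_fract c) = v c"
proof (cases "c = 0")
  case True then show ?thesis by (simp add: omega_nest_def)
next
  case False
  have "const_fract c = Fract [:c:] 1" by (simp add: const_fract_def)
  then show ?thesis using False on_Fract[OF N, of "[:c:]" 1] onp_const[OF N, of c] onp_1[OF N]
    by simp
qed

lemma on_Fract_eval:
  assumes N: "N \<in> nests_inf v" and f: "f \<noteq> 0" and g: "g \<noteq> 0"
  obtains B0 where "B0 \<in> N" "\<forall>r\<in>B0. poly f r \<noteq> 0" "\<forall>r\<in>B0. poly g r \<noteq> 0"
proof -
  have p: "f * g \<noteq> 0" using f g by simp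
  obtain B0 where B0: "B0 \<in> N" "\<forall>r\<in>B0. poly (f * g) r \<noteq> 0" using avoid_roots[OF N p] by blast
  then show ?thesis using that by auto
qed

lemma on_vg: assumes N: "N \<in> nests_inf v" and d: "\<delta> \<in> value_group (omega_nest v N)"
  shows "\<exists>n>0. nmult n \<delta> \<in> value_group v"
proof -
  obtain q where q: "q \<noteq> 0" "\<delta> = omega_nest v N q" using d by (auto simp: value_group_def)
  obtain f g where fg: "f \<noteq> 0" "g \<noteq> 0" "q = Fract f g" using fract_nz_cases[OF q(1)] by blast
  obtain B0 where B0: "B0 \<in> N" "\<forall>r\<in>B0. poly f r \<noteq> 0" "\<forall>r\<in>B0. poly g r \<noteq> 0"
    using on_Fract_eval[OF N fg(1,2)] by blast
  obtain b where b: "b \<in> B0" using nest_point[OF N B0(1)] by blast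
  have "\<delta> = v (poly f b) - v (poly g b)"
    using q(2) fg on_Fract[OF N fg(1,2)] deep_val[OF N fg(1) B0(1,2) b] deep_val[OF N fg(2) B0(1,3) b]
    by simp
  also have "\<dots> = v (poly f b / poly g b)" using B0 b by (simp add: vdiv)
  finally have "\<delta> \<in> value_group v" using B0 b by (auto simp: value_group_def)
  then show ?thesis by (intro exI[of _ 1]) simp
qed

lemma ball_center_data:
  assumes N: "N \<in> nests_inf v" and B0: "B0 \<in> N" "\<forall>r\<in>B0. poly f r \<noteq> 0" and f: "f \<noteq> 0"
    and b: "b \<in> B0" and e: "e \<in> B0"
  shows "vgt (poly f e - poly f b) (v (poly f b))"
proof -
  obtain a0 \<gamma>0 where g0: "\<gamma>0 \<in> value_group v" "B0 = cball_v v a0 \<gamma>0" using nestD(2)[OF N B0(1)] by blast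
  have eB0: "B0 = cball_v v b \<gamma>0" using cball_recenter[of b a0 \<gamma>0] b g0 by simp
  have rf: "\<And>r. poly f r = 0 \<Longrightarrow> r \<noteq> b \<and> v (r - b) < \<gamma>0"
    using ball_root_free[OF g0(1), of b b f] B0(2) eB0 center_in by blast
  have ve: "vge (e - b) \<gamma>0" using e eB0 vge_iff_cball by blast
  note X = L2[OF f rf ve]
  show ?thesis by (rule X)
qed

lemma on_res:
  assumes N: "N \<in> nests_inf v" and q0: "0 \<le> omega_nest v N q"
  shows "\<exists>(c::nat \<Rightarrow> 'a) n. (\<forall>i\<le>n. c i = 0 \<or> 0 \<le> v (c i))
             \<and> (\<exists>i\<le>n. c i \<noteq> 0 \<and> v (c i) = 0)
             \<and> (let s = (\<Sum>i\<le>n. const_fract (c i) * q ^ i) in s = 0 \<or> 0 < omega_nest v N s)"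
proof (cases "q = 0")
  case True
  show ?thesis
    by (rule exI[of _ "\<lambda>i. if i = 1 then 1 else 0"], rule exI[of _ 1]) (simp add: sum_le1 True)
next
  case False
  obtain f g where fg: "f \<noteq> 0" "g \<noteq> 0" "q = Fract f g" using fract_nz_cases[OF False] by blast
  obtain B0 where B0: "B0 \<in> N" "\<forall>r\<in>B0. poly f r \<noteq> 0" "\<forall>r\<in>B0. poly g r \<noteq> 0"
    using on_Fract_eval[OF N fg(1,2)] by blast
  obtain b where b: "b \<in> B0" using nest_point[OF N B0(1)] by blast
  define e where "e = poly f b / poly g b"
  have fb: "poly f b \<noteq> 0" and gb: "poly g b \<noteq> 0" using B0 b by auto
  have ve: "v e = omega_nest v N q"
    using fg on_Fract[OF N fg(1,2)] deep_val[OF N fg(1) B0(1,2) b] deep_val[OF N fg(2) B0(1,3) b]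
    by (simp add: e_def vdiv fb gb)
  have e0: "e \<noteq> 0" using fb gb by (simp add: e_def)
  define h where "h = [:-e:] * g + f"
  define c where "c = (\<lambda>i::nat. if i = 0 then -e else if i = 1 then 1 else (0::'a))"
  have s: "(\<Sum>i\<le>1. const_fract (c i) * q ^ i) = Fract h g"
    using fg(2) by (simp add: sum_le1 c_def const_fract_def fg(3) h_def)
  have "Fract h g = 0 \<or> 0 < omega_nest v N (Fract h g)"
  proof (cases "h = 0")
    case True then show ?thesis by (simp add: fract_collapse)
  next
    case False
    obtain B1 where B1: "B1 \<in> N" "\<forall>r\<in>B1. poly h r \<noteq> 0" using avoid_roots[OF N False] by blast
    obtain B2 where B2: "B2 \<in> N" "B2 \<subseteq> B0" "B2 \<subseteq> B1"
      using nestD(3)[OF N B0(1) B1(1)] B0(1) B1(1) by blast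
    obtain b' where b': "b' \<in> B2" using nest_point[OF N B2(1)] by blast
    have b'0: "b' \<in> B0" "b' \<in> B1" using b' B2 by auto
    have df: "vgt (poly f b' - poly f b) (v (poly f b))"
      using ball_center_data[OF N B0(1,2) fg(1) b b'0(1)] .
    have dg: "vgt (poly g b' - poly g b) (v (poly g b))"
      using ball_center_data[OF N B0(1,3) fg(2) b b'0(1)] .
    have vfb: "v (poly f b) = v e + v (poly g b)"
      using e0 gb by (simp add: e_def vdiv)
    have "vgt ((poly g b' - poly g b) * e) (v (poly g b) + v e)"
      by (rule vgt_multI[OF dg]) (simp add: vge_def)
    then have t2: "vgt ((poly g b' - poly g b) * e) (v e + v (poly g b))" by (simp add: add.commute)
    have t1: "vgt (poly f b' - poly f b) (v e + v (poly g b))" using df vfb by simp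
    have hb: "poly h b' = (poly f b' - poly f b) - (poly g b' - poly g b) * e"
      using gb by (simp add: h_def e_def field_simps)
    have "vgt (poly h b') (v e + v (poly g b))" unfolding hb by (rule vgt_diff[OF t1 t2])
    moreover have hb0: "poly h b' \<noteq> 0" using B1(2) b'0(2) by blast
    ultimately have lt: "v e + v (poly g b) < v (poly h b')" by (simp add: vgt_def)
    have "0 \<le> v e" using ve q0 by simp
    then have le: "v (poly g b) \<le> v e + v (poly g b)" by simp
    have lt2: "v (poly g b) < v (poly h b')" using le lt by (rule order.strict_trans1)
    have gg: "v (poly g b') = v (poly g b)" using strict_ultra'[OF gb dg] .
    have "omega_nest v N (Fract h g) = v (poly h b') - v (poly g b')"
      using on_Fract[OF N False fg(2)] deep_val[OF N False B1 b'0(2)]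
        deep_val[OF N fg(2) B0(1,3) b'0(1)] by simp
    then show ?thesis using lt2 gg by simp
  qed
  moreover have "\<forall>i\<le>1. c i = 0 \<or> 0 \<le> v (c i)" using ve q0 by (auto simp: c_def)
  moreover have "\<exists>i\<le>1. c i \<noteq> 0 \<and> v (c i) = 0" by (intro exI[of _ 1]) (simp add: c_def)
  ultimately show ?thesis using s by (intro exI[of _ c] exI[of _ 1]) (simp add: Let_def)
qed

lemma on_V: assumes N: "N \<in> nests_inf v" shows "omega_nest v N \<in> V_inf v"
  unfolding V_inf_def using on_isv[OF N] on_const[OF N] on_vg[OF N] on_res[OF N] by blast

end

context aval begin

lemma nest_equivD: "(N, M) \<in> nest_equiv v \<Longrightarrow> N \<in> nests_inf v \<and> M \<in> nests_inf v
     \<and> (\<forall>B\<in>N. \<exists>C\<in>M. C \<subseteq> B) \<and> (\<forall>C\<in>M. \<exists>B\<in>N. B \<subseteq> C)"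
  by (simp add: nest_equiv_def)

lemma onp_equiv: assumes E: "(N, M) \<in> nest_equiv v"
  shows "omega_nest_poly v N f = omega_nest_poly v M f"
proof -
  have N: "N \<in> nests_inf v" and M: "M \<in> nests_inf v" and cof: "\<forall>B\<in>N. \<exists>C\<in>M. C \<subseteq> B"
    using nest_equivD[OF E] by auto
  show ?thesis
  proof (cases "f = 0")
    case True then show ?thesis using onp_0[OF N] onp_0[OF M] by simp
  next
    case False
    obtain B0 where B0: "B0 \<in> N" "\<forall>r\<in>B0. poly f r \<noteq> 0" using avoid_roots[OF N False] by blast
    obtain C0 where C0: "C0 \<in> M" "\<forall>r\<in>C0. poly f r \<noteq> 0" using avoid_roots[OF M False] by blast
    obtain C where C: "C \<in> M" "C \<subseteq> B0" using cof B0(1) by blast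
    obtain D where D: "D \<in> M" "D \<subseteq> C" "D \<subseteq> C0" using nestD(3)[OF M C(1) C0(1)] C(1) C0(1) by blast
    obtain b where b: "b \<in> D" using nest_point[OF M D(1)] by blast
    have "b \<in> B0" "b \<in> C0" using b C D by auto
    then show ?thesis using deep_val[OF N False B0] deep_val[OF M False C0] by simp
  qed
qed

lemma on_equiv: assumes E: "(N, M) \<in> nest_equiv v" shows "omega_nest v N = omega_nest v M"
proof -
  have e: "omega_nest_poly v N = omega_nest_poly v M" using onp_equiv[OF E] by (rule ext)
  show ?thesis unfolding omega_nest_def e by (rule refl)
qed

lemma onp_from_on: assumes N: "N \<in> nests_inf v" and p: "p \<noteq> 0"
  shows "omega_nest_poly v N p = omega_nest v N (Fract p 1)"
  using on_Fract[OF N p] onp_1[OF N] by simp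

lemma lin_ne0: "[:-a, 1:] \<noteq> (0::'a poly)" by simp

lemma cofinal_from_lin:
  assumes N: "N \<in> nests_inf v" and M: "M \<in> nests_inf v"
    and eq: "\<And>a. omega_nest_poly v N [:-a, 1:] = omega_nest_poly v M [:-a, 1:]"
    and B: "B \<in> N"
  shows "\<exists>C\<in>M. C \<subseteq> B"
proof -
  obtain a \<gamma> where g: "\<gamma> \<in> value_group v" "B = cball_v v a \<gamma>" using nestD(2)[OF N B] by blast
  obtain B0 where B0: "B0 \<in> N" "\<forall>r\<in>B0. poly [:-a, 1:] r \<noteq> 0" using avoid_roots[OF N lin_ne0] by blast
  obtain b where b: "b \<in> B0" using nest_point[OF N B0(1)] by blast
  have aB0: "a \<notin> B0" using B0(2) by auto
  have "B0 \<subseteq> B"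
  proof (rule ccontr)
    assume "\<not> B0 \<subseteq> B"
    then have "B \<subseteq> B0" using nestD(3)[OF N B B0(1)] by blast
    then show False using aB0 g center_in by blast
  qed
  then have "b \<in> cball_v v a \<gamma>" using b g by blast
  moreover have "b \<noteq> a" using b aB0 by blast
  ultimately have ga: "\<gamma> \<le> v (b - a)" by (simp add: cball_v_def)
  have "omega_nest_poly v N [:-a, 1:] = v (b - a)" using deep_val[OF N lin_ne0 B0 b] by simp
  then have ge: "\<gamma> \<le> omega_nest_poly v M [:-a, 1:]" using ga eq by simp
  obtain C0 where C0: "C0 \<in> M" "\<forall>r\<in>C0. poly [:-a, 1:] r \<noteq> 0" using avoid_roots[OF M lin_ne0] by blast
  have "C0 \<subseteq> B"
  proof
    fix c assume c: "c \<in> C0"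
    have "omega_nest_poly v M [:-a, 1:] = v (c - a)" using deep_val[OF M lin_ne0 C0 c] by simp
    then show "c \<in> B" using ge g by (simp add: cball_v_def)
  qed
  then show ?thesis using C0(1) by blast
qed

lemma on_inj: assumes N: "N \<in> nests_inf v" and M: "M \<in> nests_inf v"
  and eq: "omega_nest v N = omega_nest v M"
  shows "(N, M) \<in> nest_equiv v"
proof -
  have e: "omega_nest_poly v N [:-a, 1:] = omega_nest_poly v M [:-a, 1:]" for a
    using onp_from_on[OF N lin_ne0] onp_from_on[OF M lin_ne0] eq by simp
  show ?thesis unfolding nest_equiv_def
    using N M cofinal_from_lin[OF N M e] cofinal_from_lin[OF M N e[symmetric]] by blast
qed

end

lemma poly_lin_induct[consumes 1, case_names const step]:
  fixes F :: "'a::alg_closed_field poly"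
  assumes "F \<noteq> 0"
    and const: "\<And>e. e \<noteq> 0 \<Longrightarrow> P [:e:]"
    and step: "\<And>a R. R \<noteq> 0 \<Longrightarrow> P R \<Longrightarrow> P ([:-a, 1:] * R)"
  shows "P F"
  using assms(1)
proof (induction "degree F" arbitrary: F rule: less_induct)
  case (less F)
  show ?case
  proof (cases "degree F = 0")
    case True
    then obtain e where e: "F = [:e:]" by (rule degree_eq_zeroE)
    then show ?thesis using less.prems const by auto
  next
    case False
    then obtain s where s: "poly F s = 0" using alg_closed_imp_poly_has_root by blast
    then obtain q where pq: "F = [:-s, 1:] * q" using poly_eq_0_iff_dvd by (metis dvdE)
    have q0: "q \<noteq> 0" using less.prems pq by auto
    have "degree ([:-s, 1:] * q) = degree [:-s, 1:] + degree q"
      by (rule degree_mult_eq) (simp_all add: q0)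
    then have dq: "degree q < degree F" using pq by simp
    show ?thesis using step[OF q0 less.hyps[OF dq q0]] pq by simp
  qed
qed

lemma Fract_add1: "Fract (p + q) 1 = Fract p 1 + Fract (q::'a::idom) 1"
  by simp
lemma Fract_mult1: "Fract (p * q) 1 = Fract p 1 * Fract (q::'a::idom) 1"
  by simp
lemma Fract_pow1: "Fract (p ^ n) 1 = Fract (p::'a::idom) 1 ^ n"
proof (induction n)
  case 0 then show ?case by (simp add: fract_collapse)
next
  case (Suc n)
  have "Fract (p ^ Suc n) 1 = Fract p 1 * Fract (p ^ n) 1" by simp
  then show ?case using Suc by simp
qed
lemma Fract_sum1: "Fract (sum f A) 1 = (\<Sum>i\<in>A. Fract (f i :: 'a::idom) 1)"
proof (induction A rule: infinite_finite_induct)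
  case (insert x F)
  have "Fract (sum f (insert x F)) 1 = Fract (f x) 1 + Fract (sum f F) 1" by (simp add: insert.hyps)
  then show ?case using insert by simp
qed (simp_all add: fract_collapse)
lemma Fract_eq0_1: "Fract p 1 = 0 \<longleftrightarrow> p = (0::'a::idom)"
  by (simp add: Zero_fract_def eq_fract)
lemma pcompose_pow: "(p ^ n) \<circ>\<^sub>p r = (p \<circ>\<^sub>p r) ^ n"
  by (induction n) (simp_all add: pcompose_mult one_pCons pcompose_pCons)

context val begin

lemma strict_ne: assumes "x \<noteq> 0" "vgt y (v x)" shows "x + y \<noteq> 0"
proof
  assume "x + y = 0"
  then have y: "y = - x" by (rule minus_unique[symmetric])
  then have "y \<noteq> 0" using assms(1) by simp
  then have "v x < v y" using assms(2) by (simp add: vgt_def)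
  then show False using y by simp
qed

lemma GL:
  assumes p: "p \<noteq> 0"
  shows "G ([:s, 1:] * p) \<gamma> = (if s = 0 then \<gamma> else min \<gamma> (v s)) + G p \<gamma>"
proof -
  define t where "t = (if s = 0 then \<gamma> else min \<gamma> (v s))"
  define m where "m = G p \<gamma>"
  define q where "q = [:s, 1:] * p"
  have qe: "q = smult s p + pCons 0 p" by (simp add: q_def mult_pCons_left)
  have c0: "coeff q 0 = s * coeff p 0" by (simp add: qe)
  have cS: "coeff q (Suc k) = s * coeff p (Suc k) + coeff p k" for k by (simp add: qe)
  have tg: "t \<le> \<gamma>" by (simp add: t_def)
  have vs: "vge s t" by (simp add: t_def vge_def)
  have Bp: "Bnd p \<gamma> m" using G_Bnd[OF p] by (simp add: m_def)
  have Bp': "vge (coeff p n) (m - nmult n \<gamma>)" for n using Bp by (simp add: Bnd_def)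
  have Bq: "Bnd q \<gamma> (t + m)" unfolding Bnd_def
  proof
    fix n show "vge (coeff q n) (t + m - nmult n \<gamma>)"
    proof (cases n)
      case 0
      have "vge (s * coeff p 0) (t + (m - nmult 0 \<gamma>))" by (rule vge_multI[OF vs Bp'])
      then show ?thesis using 0 c0 by simp
    next
      case (Suc k)
      have 1: "vge (s * coeff p n) (t + (m - nmult n \<gamma>))" by (rule vge_multI[OF vs Bp'])
      then have 1: "vge (s * coeff p n) (t + m - nmult n \<gamma>)" by (simp add: add_diff_eq)
      have "t + m - nmult n \<gamma> \<le> m - nmult k \<gamma>"
      proof -
        have "t - \<gamma> \<le> 0" using tg by simp
        then show ?thesis using Suc by (simp add: algebra_simps)
      qed
      then have 2: "vge (coeff p k) (t + m - nmult n \<gamma>)" using Bp'[of k] vge_mono by blast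
      show ?thesis using vge_add[OF 1 2] Suc cS by (simp add: algebra_simps)
    qed
  qed
  define S where "S = {n. coeff p n \<noteq> 0 \<and> v (coeff p n) + nmult n \<gamma> = m}"
  have Sfin: "finite S"
    by (rule finite_subset[of _ "{..degree p}"]) (auto simp: S_def le_degree)
  have Sne: "S \<noteq> {}" using G_attained[OF p, of \<gamma>] by (auto simp: S_def m_def)
  have gt: "vgt (coeff p n) (m - nmult n \<gamma>)" if "n \<notin> S" for n
  proof (cases "coeff p n = 0")
    case False
    have le: "m \<le> v (coeff p n) + nmult n \<gamma>" using Bp'[of n] False by (simp add: vge_def diff_le_eq)
    have ne: "m \<noteq> v (coeff p n) + nmult n \<gamma>" using that False by (auto simp: S_def)
    have "m < v (coeff p n) + nmult n \<gamma>" using ne le by (rule order.not_eq_order_implies_strict)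
    then show ?thesis by (simp add: vgt_def diff_less_eq)
  qed simp
  have "\<exists>n. coeff q n \<noteq> 0 \<and> t + m = v (coeff q n) + nmult n \<gamma>"
  proof (cases "s = 0 \<or> \<gamma> \<le> v s")
    case True
    then have tt: "t = \<gamma>" by (auto simp: t_def)
    define i where "i = Max S"
    have iS: "i \<in> S" using Sfin Sne by (simp add: i_def)
    have nS: "Suc i \<notin> S"
    proof
      assume "Suc i \<in> S"
      then have "Suc i \<le> i" unfolding i_def by (rule Max_ge[OF Sfin])
      then show False by simp
    qed
    have pi: "coeff p i \<noteq> 0" "v (coeff p i) + nmult i \<gamma> = m" using iS by (auto simp: S_def)
    have vs': "vge s \<gamma>" using True by (auto simp: vge_def)
    have x1: "vgt (coeff p (Suc i) * s) (m - nmult (Suc i) \<gamma> + \<gamma>)"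
      by (rule vgt_multI[OF gt[OF nS] vs'])
    have e1: "m - nmult (Suc i) \<gamma> + \<gamma> = v (coeff p i)"
      unfolding pi(2)[symmetric] by (simp add: algebra_simps)
    have x2: "vgt (s * coeff p (Suc i)) (v (coeff p i))"
      using x1 unfolding e1 by (simp only: mult.commute)
    have "v (coeff p i + s * coeff p (Suc i)) = v (coeff p i)"
      by (rule strict_ultra[OF pi(1) x2])
    moreover have "coeff q (Suc i) = coeff p i + s * coeff p (Suc i)" by (simp add: cS)
    ultimately have vq: "v (coeff q (Suc i)) = v (coeff p i)" by simp
    have "coeff p i + s * coeff p (Suc i) \<noteq> 0"
      using strict_ne[OF pi(1) x2] .
    then have q0: "coeff q (Suc i) \<noteq> 0" by (simp add: cS add.commute)
    have e2: "t + m = v (coeff q (Suc i)) + nmult (Suc i) \<gamma>"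
      unfolding vq tt pi(2)[symmetric] by (simp add: algebra_simps)
    show ?thesis using q0 e2 by blast
  next
    case False
    then have s0: "s \<noteq> 0" and ls: "v s < \<gamma>" by auto
    then have tt: "t = v s" by (simp add: t_def)
    obtain i where iS: "i \<in> S" using Sne by blast
    have pi: "coeff p i \<noteq> 0" "v (coeff p i) + nmult i \<gamma> = m" using iS by (auto simp: S_def)
    have v1: "v (s * coeff p i) = t + m - nmult i \<gamma>" using s0 pi tt by (simp add: vmult algebra_simps)
    have si0: "s * coeff p i \<noteq> 0" using s0 pi by simp
    show ?thesis
    proof (cases i)
      case 0
      then show ?thesis using c0 si0 v1 by (intro exI[of _ 0]) simp
    next
      case (Suc k)
      have "vgt (coeff p k) (v (s * coeff p i))"
      proof -
        have "vge (coeff p k) (m - nmult k \<gamma>)" by (rule Bp')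
        moreover have "v (s * coeff p i) < m - nmult k \<gamma>"
        proof -
          have l0: "v s - \<gamma> < 0" using ls by simp
          have e: "t + m - nmult i \<gamma> = (m - nmult k \<gamma>) + (v s - \<gamma>)"
            unfolding tt Suc by (simp add: algebra_simps)
          have "v (s * coeff p i) = (m - nmult k \<gamma>) + (v s - \<gamma>)"
            using v1 e by (rule trans)
          then show ?thesis using l0 by (simp add: add_less_same_cancel1)
        qed
        ultimately show ?thesis by (auto simp: vge_def vgt_def)
      qed
      then have "v (s * coeff p i + coeff p k) = v (s * coeff p i)" by (rule strict_ultra[OF si0])
      then have vq: "v (coeff q i) = t + m - nmult i \<gamma>" using Suc cS v1 by simp
      have "s * coeff p i + coeff p k \<noteq> 0"
        using strict_ne[OF si0 \<open>vgt (coeff p k) (v (s * coeff p i))\<close>] .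
      then have q0: "coeff q i \<noteq> 0" using Suc cS by simp
      show ?thesis using q0 vq by (intro exI[of _ i]) (simp add: algebra_simps)
    qed
  qed
  then obtain n where n: "coeff q n \<noteq> 0" "t + m = v (coeff q n) + nmult n \<gamma>" by blast
  have "G q \<gamma> = t + m" by (rule G_eq[OF Bq n])
  then show ?thesis by (simp add: q_def t_def m_def)
qed

end

lemma nmult_neg: "nmult n (- a) = - nmult n (a::'g::linordered_ab_group_add)"
  by (induction n) (simp_all add: algebra_simps)

locale sctx = aval v for v :: "'a::alg_closed_field \<Rightarrow> 'g::linordered_ab_group_add" +
  fixes w :: "'a poly fract \<Rightarrow> 'g"
  assumes wV: "w \<in> V_inf v"
begin

sublocale W: val w
  using wV by unfold_locales (simp add: V_inf_def)

lemma wconst: "w (const_fract c) = v c" using wV by (simp add: V_inf_def)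
lemma wvg: "\<delta> \<in> value_group w \<Longrightarrow> \<exists>n>0. nmult n \<delta> \<in> value_group v" using wV by (simp add: V_inf_def)
lemma wres: "0 \<le> w q \<Longrightarrow> \<exists>(c::nat \<Rightarrow> 'a) n. (\<forall>i\<le>n. c i = 0 \<or> 0 \<le> v (c i))
             \<and> (\<exists>i\<le>n. c i \<noteq> 0 \<and> v (c i) = 0)
             \<and> (let s = (\<Sum>i\<le>n. const_fract (c i) * q ^ i) in s = 0 \<or> 0 < w s)"
  using wV unfolding V_inf_def by blast

definition WP :: "'a poly \<Rightarrow> 'g" where "WP p = w (Fract p 1)"
definition dl :: "'a \<Rightarrow> 'g" where "dl a = WP [:-a, 1:]"

lemma WP_mult: "p \<noteq> 0 \<Longrightarrow> q \<noteq> 0 \<Longrightarrow> WP (p * q) = WP p + WP q"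
  unfolding WP_def Fract_mult1 by (rule W.vmult) (simp_all add: Fract_eq0_1)

lemma WP_const: "WP [:e:] = v e"
  using wconst[of e] by (simp add: WP_def const_fract_def)

lemma WP_0: "WP 0 = 0" by (simp add: WP_def fract_collapse)

lemma lin_shift: "Fract [:-b, 1:] 1 = Fract [:-a, 1:] 1 + const_fract (a - b)"
  by (simp add: const_fract_def)

lemma dl_vg: "dl a \<in> value_group v"
proof -
  have "Fract [:-a, 1:] 1 \<noteq> 0" by (simp add: Fract_eq0_1)
  then have "dl a \<in> value_group w" by (auto simp: dl_def WP_def value_group_def)
  then obtain n where n: "n > 0" "nmult n (dl a) \<in> value_group v" using wvg by blast
  then have "\<exists>e. e \<in> UNIV - {0} \<and> nmult n (dl a) = v e" unfolding value_group_def by blast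
  then obtain e where e: "e \<noteq> 0" "v e = nmult n (dl a)" by auto
  obtain r where r: "r ^ n = e" using nth_root_exists[OF n(1)] by blast
  have r0: "r \<noteq> 0" using r e(1) n(1) by (auto simp: zero_power)
  have "nmult n (v r) = nmult n (dl a)" using vpow[OF r0, of n] r e(2) by simp
  then have "dl a = v r" using nmult_inj n(1) by metis
  then show ?thesis using r0 by (auto simp: value_group_def)
qed

lemma dl_ultra: assumes "a \<noteq> b" shows "min (dl a) (v (a - b)) \<le> dl b"
proof -
  have "min (w (Fract [:-a, 1:] 1)) (w (const_fract (a - b))) \<le> w (Fract [:-a, 1:] 1 + const_fract (a - b))"
    using assms by (intro W.vadd) (simp_all add: Fract_eq0_1 const_fract_def flip: lin_shift)
  then show ?thesis using wconst by (simp add: dl_def WP_def flip: lin_shift)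
qed

lemma dl_strict: assumes "a \<noteq> b" "v (a - b) < dl a" shows "dl b = v (a - b)"
proof -
  have x: "const_fract (a - b) \<noteq> 0" using assms(1) by (simp add: const_fract_def Fract_eq0_1)
  have "W.vgt (Fract [:-a, 1:] 1) (w (const_fract (a - b)))"
    using assms(2) wconst by (simp add: W.vgt_def dl_def WP_def)
  then have "w (const_fract (a - b) + Fract [:-a, 1:] 1) = w (const_fract (a - b))"
    by (rule W.strict_ultra[OF x])
  moreover have e: "const_fract (a - b) + Fract [:-a, 1:] 1 = Fract [:-b, 1:] 1"
    by (subst add.commute) (rule lin_shift[symmetric])
  ultimately show ?thesis using wconst by (simp add: dl_def WP_def)
qed

lemma dl_chain: assumes "dl a \<le> dl b" shows "cball_v v b (dl b) \<subseteq> cball_v v a (dl a)"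
proof (cases "a = b")
  case True
  then show ?thesis using assms by (auto simp: cball_v_def intro: order.trans)
next
  case False
  have "dl a \<le> v (a - b)"
  proof (rule ccontr)
    assume "\<not> dl a \<le> v (a - b)"
    then have lt: "v (a - b) < dl a" by simp
    then have "dl b = v (a - b)" using dl_strict[OF False] by simp
    then show False using lt assms by simp
  qed
  then have "b \<in> cball_v v a (dl a)" by (simp add: cball_v_def vminus_comm)
  then have e: "cball_v v a (dl a) = cball_v v b (dl a)" using cball_recenter by simp
  show ?thesis unfolding e using assms by (auto simp: cball_v_def intro: order.trans)
qed

definition NN :: "'a set set" where "NN = {cball_v v a (dl a) | a. True}"

lemma GW: assumes mx: "\<And>a. dl a \<le> dl c" shows "WP F = omega_center v c (dl c) F"
proof (cases "F = 0")
  case True then show ?thesis by (simp add: WP_0)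
next
  case False
  define \<gamma> where "\<gamma> = dl c"
  show ?thesis unfolding \<gamma>_def[symmetric] using False
  proof (induction F rule: poly_lin_induct)
    case (const e)
    have "Bnd [:e:] \<gamma> (v e)" unfolding Bnd_def
    proof
      fix n show "vge (coeff [:e:] n) (v e - nmult n \<gamma>)"
        by (cases n) (simp_all add: vge_def)
    qed
    then have "G [:e:] \<gamma> = v e" using const by (intro G_eq[of _ _ _ 0]) simp_all
    then show ?case using const by (simp add: oc_G pcompose_const WP_const)
  next
    case (step a R)
    have lR: "[:-a, 1:] * R \<noteq> 0" by (rule no_zero_divisors[OF lin_ne0 step(1)])
    have pe: "([:-a, 1:] * R) \<circ>\<^sub>p [:c, 1:] = [:c - a, 1:] * (R \<circ>\<^sub>p [:c, 1:])"
    proof -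
      have l: "[:-a, 1:] \<circ>\<^sub>p [:c, 1:] = [:c - a, 1:]" by (simp add: pcompose_pCons)
      show ?thesis unfolding pcompose_mult l ..
    qed
    have "omega_center v c \<gamma> ([:-a, 1:] * R)
        = (if c - a = 0 then \<gamma> else min \<gamma> (v (c - a))) + omega_center v c \<gamma> R"
    proof -
      have "omega_center v c \<gamma> ([:-a, 1:] * R) = G (([:-a, 1:] * R) \<circ>\<^sub>p [:c, 1:]) \<gamma>"
        by (rule oc_G[OF lR])
      also have "\<dots> = G ([:c - a, 1:] * (R \<circ>\<^sub>p [:c, 1:])) \<gamma>" by (simp only: pe)
      also have "\<dots> = (if c - a = 0 then \<gamma> else min \<gamma> (v (c - a))) + G (R \<circ>\<^sub>p [:c, 1:]) \<gamma>"
        by (rule GL[OF pc_ne0[OF step(1)]])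
      also have "G (R \<circ>\<^sub>p [:c, 1:]) \<gamma> = omega_center v c \<gamma> R" by (rule oc_G[OF step(1), symmetric])
      finally show ?thesis .
    qed
    moreover have "dl a = (if c - a = 0 then \<gamma> else min \<gamma> (v (c - a)))"
    proof (cases "c = a")
      case True then show ?thesis by (simp add: \<gamma>_def)
    next
      case ne: False
      show ?thesis
      proof (cases "v (c - a) < \<gamma>")
        case True
        then have nl: "\<not> \<gamma> \<le> v (c - a)" by simp
        have "dl a = v (c - a)" using dl_strict[OF ne] True by (simp add: \<gamma>_def)
        then show ?thesis using nl ne by (simp add: min_def)
      next
        case False
        have "min (dl c) (v (c - a)) \<le> dl a" by (rule dl_ultra[OF ne])
        moreover have "min (dl c) (v (c - a)) = \<gamma>" using False by (simp add: \<gamma>_def min_def not_less)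
        ultimately have "\<gamma> \<le> dl a" by simp
        then have "dl a = \<gamma>" using mx[of a] by (simp add: \<gamma>_def)
        then show ?thesis using False ne by (simp add: min_def not_less)
      qed
    qed
    moreover have "WP ([:-a, 1:] * R) = dl a + WP R" unfolding dl_def by (rule WP_mult[OF lin_ne0 step(1)])
    ultimately show ?case using step(2) by simp
  qed
qed

end

context sctx begin

lemma no_max: "\<not> (\<forall>a. dl a \<le> dl c)"
proof
  assume mx: "\<forall>a. dl a \<le> dl c"
  define \<gamma> where "\<gamma> = dl c"
  obtain d where d: "d \<noteq> 0" "v d = \<gamma>" using vg_witness[OF dl_vg[of c]] \<gamma>_def by blast
  define e where "e = inverse d"
  have e0: "e \<noteq> 0" using d by (simp add: e_def)
  have ve: "v e = - \<gamma>" using d by (simp add: e_def vinv)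
  define L where "L = smult e [:-c, 1:]"
  define q where "q = Fract L 1"
  have "WP L = WP ([:e:] * [:-c, 1:])" by (simp add: L_def mult.commute)
  also have "\<dots> = WP [:e:] + WP [:-c, 1:]" by (rule WP_mult) (simp_all add: e0)
  also have "\<dots> = v e + \<gamma>" by (simp only: WP_const \<gamma>_def dl_def)
  finally have wq: "w q = 0" using ve by (simp add: q_def WP_def)
  obtain cc :: "nat \<Rightarrow> 'a" and n where
    cc1: "\<forall>i\<le>n. cc i = 0 \<or> 0 \<le> v (cc i)" and
    cc2: "\<exists>i\<le>n. cc i \<noteq> 0 \<and> v (cc i) = 0" and
    cc3: "(let s = (\<Sum>i\<le>n. const_fract (cc i) * q ^ i) in s = 0 \<or> 0 < w s)"
    using wres[of q] wq by auto
  define F where "F = (\<Sum>i\<le>n. smult (cc i) (L ^ i))"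
  define F' where "F' = (\<Sum>i\<le>n. monom (cc i * e ^ i) i)"
  have sF: "(\<Sum>i\<le>n. const_fract (cc i) * q ^ i) = Fract F 1"
    unfolding F_def Fract_sum1
  proof (rule sum.cong[OF refl])
    fix i
    have "const_fract (cc i) * q ^ i = Fract [:cc i:] 1 * Fract (L ^ i) 1"
      by (simp add: const_fract_def q_def Fract_pow1)
    also have "\<dots> = Fract (smult (cc i) (L ^ i)) 1" by simp
    finally show "const_fract (cc i) * q ^ i = Fract (smult (cc i) (L ^ i)) 1" .
  qed
  have Lc: "L \<circ>\<^sub>p [:c, 1:] = smult e [:0, 1:]" by (simp add: L_def pcompose_smult pcompose_pCons)
  have FF': "F \<circ>\<^sub>p [:c, 1:] = F'"
    unfolding F_def F'_def pcompose_sum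
  proof (rule sum.cong[OF refl])
    fix i
    have x: "[:0, e:] = smult e [:0, 1:]" by simp
    have pw: "[:0, e:] ^ i = smult (e ^ i) ([:0, 1:] ^ i)" unfolding x by (rule smult_power)
    show "smult (cc i) (L ^ i) \<circ>\<^sub>p [:c, 1:] = monom (cc i * e ^ i) i"
      by (simp add: pcompose_smult pcompose_pow Lc pw monom_altdef)
  qed
  have cF': "coeff F' k = (if k \<le> n then cc k * e ^ k else 0)" for k
    by (simp add: F'_def coeff_sum coeff_monom)
  obtain i0 where i0: "i0 \<le> n" "cc i0 \<noteq> 0" "v (cc i0) = 0" using cc2 by blast
  have c0: "coeff F' i0 \<noteq> 0" using i0 e0 by (simp add: cF')
  have vc: "v (cc k * e ^ k) = v (cc k) - nmult k \<gamma>" if "cc k \<noteq> 0" for k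
    using that e0 by (simp add: vmult vpow ve nmult_neg)
  have BF: "Bnd F' \<gamma> 0" unfolding Bnd_def
  proof
    fix k show "vge (coeff F' k) (0 - nmult k \<gamma>)"
    proof (cases "k \<le> n \<and> cc k \<noteq> 0")
      case True
      then have "0 \<le> v (cc k)" using cc1 by blast
      then show ?thesis using True vc[of k] by (simp add: cF' vge_def)
    next
      case False then show ?thesis by (auto simp: cF' vge_def)
    qed
  qed
  have GF: "G F' \<gamma> = 0"
    by (rule G_eq[OF BF c0]) (simp add: cF' i0 vc)
  have F0: "F \<noteq> 0"
  proof
    assume "F = 0" then have "F' = 0" using FF' by simp
    then show False using c0 by simp
  qed
  have "w (Fract F 1) = omega_center v c \<gamma> F" using GW[of c F] mx \<gamma>_def by (simp add: WP_def)
  also have "\<dots> = 0" using F0 by (simp add: oc_G FF' GF)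
  finally have ws: "w (Fract F 1) = 0" .
  have "Fract F 1 \<noteq> 0" using F0 by (simp add: Fract_eq0_1)
  then show False using cc3 ws by (simp add: sF Let_def)
qed

lemma NN_nest: "NN \<in> nests_inf v"
  unfolding nests_inf_def
proof (intro CollectI conjI ballI)
  show "NN \<noteq> {}" by (auto simp: NN_def)
next
  fix B assume "B \<in> NN"
  then show "is_closed_ball v B" using dl_vg by (auto simp: NN_def is_closed_ball_def)
next
  fix B C assume "B \<in> NN" "C \<in> NN"
  then obtain a b where ab: "B = cball_v v a (dl a)" "C = cball_v v b (dl b)" by (auto simp: NN_def)
  show "B \<subseteq> C \<or> C \<subseteq> B"
  proof (cases "dl a \<le> dl b")
    case True then show ?thesis using dl_chain ab by blast
  next
    case False then have "dl b \<le> dl a" by simp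
    then show ?thesis using dl_chain ab by blast
  qed
next
  show "\<Inter> NN = {}"
  proof (rule ccontr)
    assume "\<Inter> NN \<noteq> {}"
    then obtain c where c: "c \<in> \<Inter> NN" by blast
    have "dl a \<le> dl c" for a
    proof (cases "a = c")
      case False
      have "c \<in> cball_v v a (dl a)" using c by (auto simp: NN_def)
      then have le: "dl a \<le> v (a - c)" using False by (simp add: cball_v_def vminus_comm)
      have "min (dl a) (v (a - c)) \<le> dl c" by (rule dl_ultra[OF False])
      then show ?thesis using le by (simp add: min_def)
    qed simp
    then show False using no_max by blast
  qed
qed

lemma onp_lin: "omega_nest_poly v NN [:-a, 1:] = dl a"
proof -
  obtain B0 where B0: "B0 \<in> NN" "\<forall>r\<in>B0. poly [:-a, 1:] r \<noteq> 0"
    using avoid_roots[OF NN_nest lin_ne0] by blast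
  obtain e where e: "B0 = cball_v v e (dl e)" using B0(1) by (auto simp: NN_def)
  have eB: "e \<in> B0" using e center_in by simp
  have ea: "e \<noteq> a" using B0(2) eB by auto
  have "a \<notin> B0" using B0(2) by auto
  then have "\<not> dl e \<le> v (a - e)" using e by (simp add: cball_v_def)
  then have lt: "v (e - a) < dl e" by (simp add: vminus_comm)
  have "dl a = v (e - a)" by (rule dl_strict[OF ea lt])
  moreover have "omega_nest_poly v NN [:-a, 1:] = v (e - a)"
    using deep_val[OF NN_nest lin_ne0 B0 eB] by simp
  ultimately show ?thesis by simp
qed

lemma WP_onp: "F \<noteq> 0 \<Longrightarrow> WP F = omega_nest_poly v NN F"
proof (induction F rule: poly_lin_induct)
  case (const e) then show ?case by (simp add: WP_const onp_const[OF NN_nest])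
next
  case (step a R)
  have "WP ([:-a, 1:] * R) = dl a + WP R" unfolding dl_def by (rule WP_mult[OF lin_ne0 step(1)])
  moreover have "omega_nest_poly v NN ([:-a, 1:] * R) = omega_nest_poly v NN [:-a, 1:] + omega_nest_poly v NN R"
    by (rule onp_mult[OF NN_nest lin_ne0 step(1)])
  ultimately show ?case using step(2) onp_lin by simp
qed

lemma w_eq: "omega_nest v NN = w"
proof
  fix q
  show "omega_nest v NN q = w q"
  proof (cases "q = 0")
    case True then show ?thesis by (simp add: omega_nest_def)
  next
    case False
    obtain f g where fg: "f \<noteq> 0" "g \<noteq> 0" "q = Fract f g" using fract_nz_cases[OF False] by blast
    have "Fract f 1 = q * Fract g 1" using fg by (simp add: eq_fract)
    then have "WP f = w q + WP g" unfolding WP_def using False fg(2)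
      by (simp add: W.vmult Fract_eq0_1)
    then have "w q = WP f - WP g" by (simp add: algebra_simps)
    then show ?thesis using on_Fract[OF NN_nest fg(1,2)] fg WP_onp by simp
  qed
qed

end

lemma surj_V:
  fixes v :: "'a::alg_closed_field \<Rightarrow> 'g::linordered_ab_group_add"
  assumes "is_valuation v" "w \<in> V_inf v"
  shows "\<exists>N\<in>nests_inf v. omega_nest v N = w"
proof -
  interpret sctx v w by unfold_locales (use assms in auto)
  show ?thesis using NN_nest w_eq by blast
qed


lemma nest_equiv_equiv: "equiv (nests_inf v) (nest_equiv v)"
proof (rule equivI)
  show "nest_equiv v \<subseteq> nests_inf v \<times> nests_inf v" by (auto simp: nest_equiv_def)
  show "refl_on (nests_inf v) (nest_equiv v)" by (rule refl_onI) (auto simp: nest_equiv_def)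
  show "sym (nest_equiv v)" by (rule symI) (auto simp: nest_equiv_def)
  show "trans (nest_equiv v)"
  proof (rule transI)
    fix N M P assume a: "(N, M) \<in> nest_equiv v" "(M, P) \<in> nest_equiv v"
    show "(N, P) \<in> nest_equiv v" unfolding nest_equiv_def
    proof (intro CollectI case_prodI conjI ballI)
      show "N \<in> nests_inf v" "P \<in> nests_inf v" using a by (auto simp: nest_equiv_def)
    next
      fix B assume "B \<in> N"
      then obtain C where "C \<in> M" "C \<subseteq> B" using a(1) by (auto simp: nest_equiv_def)
      moreover obtain D where "D \<in> P" "D \<subseteq> C" using a(2) \<open>C \<in> M\<close> by (auto simp: nest_equiv_def)
      ultimately show "\<exists>D\<in>P. D \<subseteq> B" by blast
    next
      fix D assume "D \<in> P"
      then obtain C where "C \<in> M" "C \<subseteq> D" using a(2) by (auto simp: nest_equiv_def)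
      moreover obtain B where "B \<in> N" "B \<subseteq> C" using a(1) \<open>C \<in> M\<close> by (auto simp: nest_equiv_def)
      ultimately show "\<exists>B\<in>N. B \<subseteq> D" by blast
    qed
  qed
qed

theorem theorem2p2:
  fixes v :: "'a::alg_closed_field \<Rightarrow> 'g::linordered_ab_group_add"
  assumes "is_valuation v"
  shows "(\<forall>N\<in>nests_inf v. omega_nest v N \<in> V_inf v)
       \<and> (\<forall>N M. (N, M) \<in> nest_equiv v \<longrightarrow> omega_nest v N = omega_nest v M)
       \<and> bij_betw (\<lambda>X. omega_nest v (SOME N. N \<in> X)) (nests_inf v // nest_equiv v) (V_inf v)"
proof -
  interpret aval v by unfold_locales (rule assms)
  have E: "equiv (nests_inf v) (nest_equiv v)" by (rule nest_equiv_equiv)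
  have cls: "omega_nest v (SOME N. N \<in> nest_equiv v `` {M}) = omega_nest v M"
    if M: "M \<in> nests_inf v" for M
  proof -
    have "M \<in> nest_equiv v `` {M}" by (rule equiv_class_self[OF E M])
    then have "(SOME N. N \<in> nest_equiv v `` {M}) \<in> nest_equiv v `` {M}" by (rule someI)
    then have "(M, SOME N. N \<in> nest_equiv v `` {M}) \<in> nest_equiv v" by simp
    then show ?thesis using on_equiv by metis
  qed
  have p1: "\<forall>N\<in>nests_inf v. omega_nest v N \<in> V_inf v" using on_V by blast
  have p2: "\<forall>N M. (N, M) \<in> nest_equiv v \<longrightarrow> omega_nest v N = omega_nest v M" using on_equiv by blast
  have inj: "inj_on (\<lambda>X. omega_nest v (SOME N. N \<in> X)) (nests_inf v // nest_equiv v)"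
  proof (rule inj_onI)
    fix X Y assume X: "X \<in> nests_inf v // nest_equiv v" and Y: "Y \<in> nests_inf v // nest_equiv v"
      and eq: "omega_nest v (SOME N. N \<in> X) = omega_nest v (SOME N. N \<in> Y)"
    obtain N where N: "X = nest_equiv v `` {N}" "N \<in> nests_inf v" using X by (rule quotientE)
    obtain M where M: "Y = nest_equiv v `` {M}" "M \<in> nests_inf v" using Y by (rule quotientE)
    have "omega_nest v N = omega_nest v M" using eq cls[OF N(2)] cls[OF M(2)] N(1) M(1) by simp
    then have "(N, M) \<in> nest_equiv v" by (rule on_inj[OF N(2) M(2)])
    then show "X = Y" using N M eq_equiv_class_iff[OF E N(2) M(2)] by simp
  qed
  have img: "(\<lambda>X. omega_nest v (SOME N. N \<in> X)) ` (nests_inf v // nest_equiv v) = V_inf v"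
  proof
    show "(\<lambda>X. omega_nest v (SOME N. N \<in> X)) ` (nests_inf v // nest_equiv v) \<subseteq> V_inf v"
    proof
      fix w assume "w \<in> (\<lambda>X. omega_nest v (SOME N. N \<in> X)) ` (nests_inf v // nest_equiv v)"
      then obtain X where X: "X \<in> nests_inf v // nest_equiv v" "w = omega_nest v (SOME N. N \<in> X)" by blast
      obtain N where N: "X = nest_equiv v `` {N}" "N \<in> nests_inf v" using X(1) by (rule quotientE)
      show "w \<in> V_inf v" using X(2) N cls[OF N(2)] on_V[OF N(2)] by simp
    qed
  next
    show "V_inf v \<subseteq> (\<lambda>X. omega_nest v (SOME N. N \<in> X)) ` (nests_inf v // nest_equiv v)"
    proof
      fix w assume w: "w \<in> V_inf v"
      obtain N where N: "N \<in> nests_inf v" "omega_nest v N = w" using surj_V[OF assms w] by blast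
      have "nest_equiv v `` {N} \<in> nests_inf v // nest_equiv v" using N(1) by (rule quotientI)
      moreover have "w = omega_nest v (SOME M. M \<in> nest_equiv v `` {N})" using cls[OF N(1)] N(2) by simp
      ultimately show "w \<in> (\<lambda>X. omega_nest v (SOME N. N \<in> X)) ` (nests_inf v // nest_equiv v)" by blast
    qed
  qed
  show ?thesis using p1 p2 inj img by (simp add: bij_betw_def)
qed


end
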